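(* Let $D$ be a function assigning a nonnegative real number to each pair of density operators on the same finite-dimensional space and which is contractive under CPTP maps, i.e. $D(\Phi(\rho),\Phi(\sigma))\le D(\rho,\sigma)$ for all CPTP maps $\Phi$. Let $\rho$ be a density operator on $\mathbb{C}^d$, $\rho'=U_A(\rho\otimes|0\rangle\langle0|^{\otimes d})U_A^\dagger$ and $\rho''=\Delta(\rho')$. Then for every $2\le k\le d$, $$C_D^{(k)}(\rho)\ge E_D^{(k+1)}(\rho'),\qquad C_D^{(k)}(\rho)\ge E_D^{(k)}(\rho''),$$ where $E_D^{(k+1)}(\rho')$ is computed with respect to the $d+1$ parties (qudit and $d$ qubits) and $E_D^{(k)}(\rho'')$ with respect to the $d$ qubit parties.
   Context: Fix an orthonormal basis $\{|i\rangle\}_{i=1}^d$ of $\mathbb{C}^d$. The coherence rank $\mathrm{CR}(|\psi\rangle)$ is the number of nonzero coefficients of $|\psi\rangle$ in this basis; $\mathrm{CN}(\rho)=\min\max_i\mathrm{CR}(|\psi_i\rangle)$ over pure-state decompositions $\rho=\sum_ip_i|\psi_i\rangle\langle\psi_i|$. $\mathcal{I}^{(k)}$ is the set of states with $\mathrm{CN}\le k$. A multipartite pure state is $k$-producible if it is a tensor product of factors each on at most $k$ parties, a mixed state is $k$-producible if it is a convex combination of such; $\mathcal{P}^{(k)}$ denotes the set of $k$-producible states. Define $E_D^{(k)}(\rho)=\inf_{\varsigma\in\mathcal{P}^{(k-1)}}D(\rho,\varsigma)$ and $C_D^{(k)}(\rho)=\inf_{\sigma\in\mathcal{I}^{(k-1)}}D(\rho,\sigma)$.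 Notation $|\underline{2^{d-i}}\rangle=|0\rangle^{\otimes(i-1)}|1\rangle|0\rangle^{\otimes(d-i)}\in(\mathbb{C}^2)^{\otimes d}$. $U_A=\sum_{i=1}^d|i\rangle\langle i|\otimes\mathbb{1}_2^{\otimes(i-1)}\otimes\sigma_x\otimes\mathbb{1}_2^{\otimes(d-i)}$. With $\mathcal{F}|j\rangle=\frac1{\sqrt d}\sum_m e^{2\pi ijm/d}|m\rangle$ and $U_D^{(m)}=\bigotimes_{j=1}^d(|0\rangle\langle0|+e^{-2\pi ijm/d}|1\rangle\langle1|)$, the map $\Delta$ from qudit-plus-$d$-qubit states to $d$-qubit states is $\Delta(X)=\sum_{m=1}^dU_D^{(m)}\mathrm{Tr}_{\mathrm{qudit}}[(|m\rangle\langle m|\otimes\mathbb{1})(\mathcal{F}\otimes\mathbb{1})X(\mathcal{F}^\dagger\otimes\mathbb{1})]U_D^{(m)\dagger}$. *)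

theory Defs
  imports Complex_Main "Jordan_Normal_Form.Matrix"
begin

section \<open>Basic matrix notions (indices 0-based; basis vector |i> of the paper is index i-1)\<close>

definition adj :: "complex mat \<Rightarrow> complex mat" where
  "adj A = mat (dim_col A) (dim_row A) (\<lambda>(i,j). cnj (A $$ (j,i)))"

definition kron :: "complex mat \<Rightarrow> complex mat \<Rightarrow> complex mat" where
  "kron A B = mat (dim_row A * dim_row B) (dim_col A * dim_col B)
     (\<lambda>(i,j). A $$ (i div dim_row B, j div dim_col B) * B $$ (i mod dim_row B, j mod dim_col B))"

fun kron_pow :: "complex mat \<Rightarrow> nat \<Rightarrow> complex mat" where
  "kron_pow A 0 = 1\<^sub>m 1"
| "kron_pow A (Suc n) = kron A (kron_pow A n)"

definition msum :: "nat \<Rightarrow> ('b \<Rightarrow> complex mat) \<Rightarrow> 'b list \<Rightarrow> complex mat" where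
  "msum n f xs = foldr (\<lambda>i acc. f i + acc) xs (0\<^sub>m n n)"

definition ketbra :: "nat \<Rightarrow> nat \<Rightarrow> nat \<Rightarrow> complex mat" where
  "ketbra n a b = mat n n (\<lambda>(i,j). if i = a \<and> j = b then 1 else 0)"

definition proj :: "complex vec \<Rightarrow> complex mat" where
  "proj v = mat (dim_vec v) (dim_vec v) (\<lambda>(i,j). v $ i * cnj (v $ j))"

definition unit_vec_c :: "nat \<Rightarrow> complex vec \<Rightarrow> bool" where
  "unit_vec_c n v \<longleftrightarrow> dim_vec v = n \<and> (\<Sum>i<n. (cmod (v $ i))\<^sup>2) = 1"

definition mtrace :: "complex mat \<Rightarrow> complex" where
  "mtrace A = (\<Sum>i<dim_row A. A $$ (i,i))"

definition psd :: "nat \<Rightarrow> complex mat \<Rightarrow> bool" where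
  "psd n A \<longleftrightarrow> A \<in> carrier_mat n n \<and>
     (\<forall>v. dim_vec v = n \<longrightarrow>
        (let z = (\<Sum>i<n. \<Sum>j<n. cnj (v $ i) * A $$ (i,j) * v $ j) in Im z = 0 \<and> Re z \<ge> 0))"

definition density :: "nat \<Rightarrow> complex mat \<Rightarrow> bool" where
  "density n \<rho> \<longleftrightarrow> psd n \<rho> \<and> mtrace \<rho> = 1"

definition ptrace_first :: "nat \<Rightarrow> nat \<Rightarrow> complex mat \<Rightarrow> complex mat" where
  "ptrace_first a b X = mat b b (\<lambda>(i,j). \<Sum>k<a. X $$ (k*b+i, k*b+j))"

definition block :: "nat \<Rightarrow> complex mat \<Rightarrow> nat \<Rightarrow> nat \<Rightarrow> complex mat" where
  "block n X a b = mat n n (\<lambda>(r,s). X $$ (a*n+r, b*n+s))"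

text \<open>(id_k (x) Phi) applied to a (k n) x (k n) matrix, the ancilla C^k being the first factor.\<close>
definition id_tensor :: "nat \<Rightarrow> nat \<Rightarrow> nat \<Rightarrow> (complex mat \<Rightarrow> complex mat) \<Rightarrow> complex mat \<Rightarrow> complex mat" where
  "id_tensor k n m \<Phi> X = mat (k*m) (k*m)
     (\<lambda>(i,j). \<Phi> (block n X (i div m) (j div m)) $$ (i mod m, j mod m))"

definition cptp :: "nat \<Rightarrow> nat \<Rightarrow> (complex mat \<Rightarrow> complex mat) \<Rightarrow> bool" where
  "cptp n m \<Phi> \<longleftrightarrow>
     (\<forall>X \<in> carrier_mat n n. \<Phi> X \<in> carrier_mat m m) \<and>
     (\<forall>X \<in> carrier_mat n n. \<forall>Y \<in> carrier_mat n n. \<forall>c. \<Phi> (c \<cdot>\<^sub>m X + Y) = c \<cdot>\<^sub>m \<Phi> X + \<Phi> Y) \<and>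
     (\<forall>X \<in> carrier_mat n n. mtrace (\<Phi> X) = mtrace X) \<and>
     (\<forall>k X. psd (k*n) X \<longrightarrow> psd (k*m) (id_tensor k n m \<Phi> X))"

definition contractive_distance :: "(complex mat \<Rightarrow> complex mat \<Rightarrow> real) \<Rightarrow> bool" where
  "contractive_distance D \<longleftrightarrow>
     (\<forall>n \<rho> \<sigma>. density n \<rho> \<and> density n \<sigma> \<longrightarrow> 0 \<le> D \<rho> \<sigma>) \<and>
     (\<forall>n m \<Phi> \<rho> \<sigma>. cptp n m \<Phi> \<and> density n \<rho> \<and> density n \<sigma> \<longrightarrow> D (\<Phi> \<rho>) (\<Phi> \<sigma>) \<le> D \<rho> \<sigma>)"

definition pure_decomp :: "nat \<Rightarrow> complex mat \<Rightarrow> (real \<times> complex vec) list \<Rightarrow> bool" where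
  "pure_decomp n \<rho> ps \<longleftrightarrow> ps \<noteq> [] \<and>
     (\<forall>(p,\<psi>) \<in> set ps. p > 0 \<and> unit_vec_c n \<psi>) \<and>
     (\<Sum>(p,\<psi>)\<leftarrow>ps. p) = 1 \<and>
     \<rho> = msum n (\<lambda>(p,\<psi>). complex_of_real p \<cdot>\<^sub>m proj \<psi>) ps"

definition coh_rank :: "complex vec \<Rightarrow> nat" where
  "coh_rank \<psi> = card {i. i < dim_vec \<psi> \<and> \<psi> $ i \<noteq> 0}"

definition coh_number :: "nat \<Rightarrow> complex mat \<Rightarrow> nat" where
  "coh_number n \<rho> = (LEAST r. \<exists>ps. pure_decomp n \<rho> ps \<and> (\<forall>(p,\<psi>) \<in> set ps. coh_rank \<psi> \<le> r))"

definition incoh_set :: "nat \<Rightarrow> nat \<Rightarrow> complex mat set" where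
  "incoh_set d k = {\<sigma>. density d \<sigma> \<and> coh_number d \<sigma> \<le> k}"

text \<open>Parties with local dimensions dims; the total space is the Kronecker product in list order,
  party 0 being the most significant digit.\<close>
definition digit :: "nat list \<Rightarrow> nat \<Rightarrow> nat \<Rightarrow> nat" where
  "digit dims x i = (x div prod_list (drop (Suc i) dims)) mod (dims ! i)"

definition k_partition :: "nat \<Rightarrow> nat \<Rightarrow> nat set set \<Rightarrow> bool" where
  "k_partition N k P \<longleftrightarrow> \<Union>P = {..<N} \<and> (\<forall>B\<in>P. B \<noteq> {} \<and> card B \<le> k) \<and>
     (\<forall>B\<in>P. \<forall>C\<in>P. B \<noteq> C \<longrightarrow> B \<inter> C = {})"

text \<open>psi is a tensor product of factors, one factor for each block of a partition of the parties
  into blocks of at most k parties.\<close>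
definition k_producible_pure :: "nat list \<Rightarrow> nat \<Rightarrow> complex vec \<Rightarrow> bool" where
  "k_producible_pure dims k \<psi> \<longleftrightarrow> unit_vec_c (prod_list dims) \<psi> \<and>
     (\<exists>P \<phi>. k_partition (length dims) k P \<and>
        (\<forall>x < prod_list dims. \<psi> $ x =
           (\<Prod>B\<in>P. \<phi> B (\<lambda>j. if j \<in> B then digit dims x j else 0))))"

definition producible_set :: "nat list \<Rightarrow> nat \<Rightarrow> complex mat set" where
  "producible_set dims k = {\<rho>. \<exists>ps. pure_decomp (prod_list dims) \<rho> ps \<and>
     (\<forall>(p,\<psi>) \<in> set ps. k_producible_pure dims k \<psi>)}"

definition E_D :: "(complex mat \<Rightarrow> complex mat \<Rightarrow> real) \<Rightarrow> nat list \<Rightarrow> nat \<Rightarrow> complex mat \<Rightarrow> real" where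
  "E_D D dims k \<rho> = Inf ((\<lambda>s. D \<rho> s) ` producible_set dims (k - 1))"

definition C_D :: "(complex mat \<Rightarrow> complex mat \<Rightarrow> real) \<Rightarrow> nat \<Rightarrow> nat \<Rightarrow> complex mat \<Rightarrow> real" where
  "C_D D d k \<rho> = Inf ((\<lambda>\<sigma>. D \<rho> \<sigma>) ` incoh_set d (k - 1))"

definition sigma_x :: "complex mat" where
  "sigma_x = mat 2 2 (\<lambda>(i,j). if i \<noteq> j then 1 else 0)"

text \<open>U_A = sum_i |i><i| (x) 1^(i-1) (x) sigma_x (x) 1^(d-i); here i is 0-based.\<close>
definition U_A :: "nat \<Rightarrow> complex mat" where
  "U_A d = msum (d * 2^d)
     (\<lambda>i. kron (ketbra d i i) (kron (1\<^sub>m (2^i)) (kron sigma_x (1\<^sub>m (2^(d - Suc i)))))) [0..<d]"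

definition zero_proj :: "nat \<Rightarrow> complex mat" where
  "zero_proj d = kron_pow (ketbra 2 0 0) d"

definition rho' :: "nat \<Rightarrow> complex mat \<Rightarrow> complex mat" where
  "rho' d \<rho> = U_A d * kron \<rho> (zero_proj d) * adj (U_A d)"

text \<open>Fourier matrix: F|j> = 1/sqrt d sum_m e^(2 pi i j m/d) |m>, paper indices j,m in 1..d
  correspond to 0-based a = j-1, b = m-1.\<close>
definition fourier :: "nat \<Rightarrow> complex mat" where
  "fourier d = mat d d (\<lambda>(b,a). cis (2 * pi * real (Suc a) * real (Suc b) / real d) / complex_of_real (sqrt (real d)))"

text \<open>U_D^(m) = tensor_{j=1..d} (|0><0| + e^(-2 pi i j m/d)|1><1|), m paper index 1..d.\<close>
definition U_D :: "nat \<Rightarrow> nat \<Rightarrow> complex mat" where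
  "U_D d m = foldr (\<lambda>j acc. kron (mat 2 2 (\<lambda>(r,s). if r = 0 \<and> s = 0 then 1
                          else if r = 1 \<and> s = 1 then cis (- 2 * pi * real j * real m / real d) else 0)) acc)
             [1..<Suc d] (1\<^sub>m 1)"

definition Delta :: "nat \<Rightarrow> complex mat \<Rightarrow> complex mat" where
  "Delta d X = msum (2^d)
     (\<lambda>m. U_D d m *
        ptrace_first d (2^d)
          (kron (ketbra d (m - 1) (m - 1)) (1\<^sub>m (2^d)) * (kron (fourier d) (1\<^sub>m (2^d))) * X *
           (kron (adj (fourier d)) (1\<^sub>m (2^d))))
        * adj (U_D d m)) [1..<Suc d]"

end

theory Submission
  imports Defs
begin

lemma sum_prod_split:
  "(\<Sum>i<a*b. f i) = (\<Sum>x<a. \<Sum>y<b. f (x*b+y::nat))"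
proof (induction a)
  case 0 then show ?case by simp
next
  case (Suc a)
  have "{..<Suc a * b} = {..<a*b} \<union> {a*b..<a*b+b}"
    by auto
  moreover have "{..<a*b} \<inter> {a*b..<a*b+b} = {}" by auto
  ultimately have "(\<Sum>i<Suc a*b. f i) = (\<Sum>i<a*b. f i) + (\<Sum>i\<in>{a*b..<a*b+b}. f i)"
    by (simp add: sum.union_disjoint)
  also have "(\<Sum>i\<in>{a*b..<a*b+b}. f i) = (\<Sum>y<b. f (a*b+y))"
    using sum.shift_bounds_nat_ivl[of f 0 "a*b" b] by (simp add: atLeast0LessThan add.commute)
  finally show ?case using Suc by simp
qed
lemma mult_index:
  assumes "i < dim_row A" "j < dim_col B" "dim_col A = dim_row B"
  shows "(A*B)$$(i,j) = (\<Sum>k<dim_col A. A$$(i,k) * B$$(k,j))"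
  using assms by (simp add: scalar_prod_def atLeast0LessThan)

lemma adj_carrier[simp]: "dim_row (adj A) = dim_col A" "dim_col (adj A) = dim_row A"
  by (auto simp: adj_def)
lemma adj_index[simp]: "i < dim_col A \<Longrightarrow> j < dim_row A \<Longrightarrow> adj A $$ (i,j) = cnj (A $$ (j,i))"
  by (simp add: adj_def)

lemma kron_dim[simp]: "dim_row (kron A B) = dim_row A * dim_row B" "dim_col (kron A B) = dim_col A * dim_col B"
  by (auto simp: kron_def)
lemma kron_index:
  "i < dim_row A * dim_row B \<Longrightarrow> j < dim_col A * dim_col B \<Longrightarrow>
   kron A B $$ (i,j) = A $$ (i div dim_row B, j div dim_col B) * B $$ (i mod dim_row B, j mod dim_col B)"
  by (simp add: kron_def)

lemma ketbra_dim[simp]: "dim_row (ketbra n a b) = n" "dim_col (ketbra n a b) = n"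
  by (auto simp: ketbra_def)
lemma ketbra_index[simp]: "i < n \<Longrightarrow> j < n \<Longrightarrow> ketbra n a b $$ (i,j) = (if i = a \<and> j = b then 1 else 0)"
  by (simp add: ketbra_def)

lemma proj_dim[simp]: "dim_row (proj v) = dim_vec v" "dim_col (proj v) = dim_vec v"
  by (auto simp: proj_def)
lemma proj_index[simp]: "i < dim_vec v \<Longrightarrow> j < dim_vec v \<Longrightarrow> proj v $$ (i,j) = v$i * cnj (v$j)"
  by (simp add: proj_def)

lemma msum_carrier:
  assumes "\<And>x. x \<in> set xs \<Longrightarrow> f x \<in> carrier_mat n n"
  shows "msum n f xs \<in> carrier_mat n n"
  using assms by (induction xs) (auto simp: msum_def)

lemma msum_index:
  assumes "\<And>x. x \<in> set xs \<Longrightarrow> f x \<in> carrier_mat n n" "i < n" "j < n"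
  shows "msum n f xs $$ (i,j) = (\<Sum>x\<leftarrow>xs. f x $$ (i,j))"
  using assms
proof (induction xs)
  case Nil then show ?case by (simp add: msum_def)
next
  case (Cons a xs)
  have "msum n f xs \<in> carrier_mat n n" using Cons by (intro msum_carrier) auto
  moreover have "msum n f (a#xs) = f a + msum n f xs" by (simp add: msum_def)
  ultimately show ?case using Cons by simp
qed


lemma sandwich_index:
  assumes "V \<in> carrier_mat m n" "X \<in> carrier_mat n n" "i < m" "j < m"
  shows "(V * X * adj V) $$ (i,j) = (\<Sum>a<n. \<Sum>b<n. V$$(i,a) * X$$(a,b) * cnj (V$$(j,b)))"
proof -
  have "(V * X * adj V) $$ (i,j) = (\<Sum>b<n. (V*X)$$(i,b) * cnj (V$$(j,b)))"
    using assms by (subst mult_index) auto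
  also have "\<dots> = (\<Sum>b<n. (\<Sum>a<n. V$$(i,a) * X$$(a,b)) * cnj (V$$(j,b)))"
    using assms by (intro sum.cong refl, subst mult_index) auto
  also have "\<dots> = (\<Sum>a<n. \<Sum>b<n. V$$(i,a) * X$$(a,b) * cnj (V$$(j,b)))"
    unfolding sum_distrib_right by (rule sum.swap)
  finally show ?thesis .
qed

definition qf :: "nat \<Rightarrow> complex mat \<Rightarrow> complex vec \<Rightarrow> complex" where
  "qf n A v = (\<Sum>i<n. \<Sum>j<n. cnj (v $ i) * A $$ (i,j) * v $ j)"

lemma psd_iff: "psd n A \<longleftrightarrow> A \<in> carrier_mat n n \<and> (\<forall>v. dim_vec v = n \<longrightarrow> Im (qf n A v) = 0 \<and> Re (qf n A v) \<ge> 0)"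
  by (simp add: psd_def qf_def Let_def)


lemma cnj_mult_self: "cnj z * z = complex_of_real ((cmod z)^2)"
  by (metis complex_norm_square mult.commute)

lemma qf_single:
  "(\<Sum>i<n. \<Sum>j<n. cnj (v$i) * (complex_of_real p * w$i * cnj (w$j)) * v$j)
   = complex_of_real (p * (cmod (\<Sum>j<n. cnj (w$j) * v$j))^2)"
proof -
  define c where "c = (\<Sum>j<n. cnj (w$j) * v$j)"
  have "(\<Sum>i<n. \<Sum>j<n. cnj (v$i) * (complex_of_real p * w$i * cnj (w$j)) * v$j)
      = complex_of_real p * ((\<Sum>i<n. cnj (v$i) * w$i) * (\<Sum>j<n. cnj (w$j) * v$j))"
    by (simp add: sum_distrib_left sum_distrib_right mult_ac)
  also have "(\<Sum>i<n. cnj (v$i) * w$i) = cnj c"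
    by (simp add: mult.commute c_def)
  finally show ?thesis by (simp add: cnj_mult_self c_def[symmetric])
qed

lemma qf_list:
  "(\<Sum>i<n. \<Sum>j<n. cnj (v$i) * (\<Sum>(p,w)\<leftarrow>ws. complex_of_real p * w$i * cnj (w$j)) * v$j)
   = complex_of_real (\<Sum>(p,w)\<leftarrow>ws. p * (cmod (\<Sum>j<n. cnj (w$j) * v$j))^2)"
proof (induction ws)
  case Nil then show ?case by simp
next
  case (Cons pw ws)
  obtain p w where pw: "pw = (p,w)" by (cases pw)
  have e: "\<And>i j. cnj (v$i) * (\<Sum>(p,w)\<leftarrow>pw#ws. complex_of_real p * w$i * cnj (w$j)) * v$j
     = cnj (v$i) * (complex_of_real p * w$i * cnj (w$j)) * v$j
      + cnj (v$i) * (\<Sum>(p,w)\<leftarrow>ws. complex_of_real p * w$i * cnj (w$j)) * v$j"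
    by (simp add: pw ring_distribs)
  have "(\<Sum>i<n. \<Sum>j<n. cnj (v$i) * (\<Sum>(p,w)\<leftarrow>pw#ws. complex_of_real p * w$i * cnj (w$j)) * v$j)
    = (\<Sum>i<n. \<Sum>j<n. cnj (v$i) * (complex_of_real p * w$i * cnj (w$j)) * v$j)
      + (\<Sum>i<n. \<Sum>j<n. cnj (v$i) * (\<Sum>(p,w)\<leftarrow>ws. complex_of_real p * w$i * cnj (w$j)) * v$j)"
    by (simp only: e sum.distrib)
  also have "\<dots> = complex_of_real (p * (cmod (\<Sum>j<n. cnj (w$j) * v$j))^2)
     + complex_of_real (\<Sum>(p,w)\<leftarrow>ws. p * (cmod (\<Sum>j<n. cnj (w$j) * v$j))^2)"
    by (simp only: qf_single Cons.IH)
  finally show ?case by (simp add: pw)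
qed

lemma psd_of_entries:
  assumes "A \<in> carrier_mat n n"
    and "\<And>i j. i < n \<Longrightarrow> j < n \<Longrightarrow> A$$(i,j) = (\<Sum>(p,w)\<leftarrow>ws. complex_of_real p * w$i * cnj (w$j))"
    and "\<And>p w. (p,w) \<in> set ws \<Longrightarrow> p \<ge> 0"
  shows "psd n A"
proof -
  have "qf n A v = complex_of_real (\<Sum>(p,w)\<leftarrow>ws. p * (cmod (\<Sum>j<n. cnj (w$j) * v$j))^2)" for v
    unfolding qf_def by (subst qf_list[symmetric]) (simp add: assms(2))
  moreover have "(\<Sum>(p,w)\<leftarrow>ws. p * (cmod (\<Sum>j<n. cnj (w$j) * v$j))^2) \<ge> 0" for v
    by (rule sum_list_nonneg) (use assms(3) in auto)
  ultimately show ?thesis using assms(1) by (simp add: psd_iff)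
qed

lemma sum_list_sum_swap:
  "(\<Sum>i\<in>A. \<Sum>x\<leftarrow>xs. f i x) = (\<Sum>x\<leftarrow>xs. \<Sum>i\<in>A. f i x)"
  by (induction xs) (simp_all add: sum.distrib)

lemma pure_decomp_entries:
  assumes "pure_decomp n \<rho> ps"
  shows "\<rho> \<in> carrier_mat n n"
    "\<And>i j. i < n \<Longrightarrow> j < n \<Longrightarrow> \<rho>$$(i,j) = (\<Sum>(p,w)\<leftarrow>ps. complex_of_real p * w$i * cnj (w$j))"
proof -
  have pd: "\<And>p \<psi>. (p,\<psi>) \<in> set ps \<Longrightarrow> dim_vec \<psi> = n"
    and rho: "\<rho> = msum n (\<lambda>(p,\<psi>). complex_of_real p \<cdot>\<^sub>m proj \<psi>) ps"
    using assms unfolding pure_decomp_def unit_vec_c_def by auto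
  have c: "(\<lambda>(p,\<psi>). complex_of_real p \<cdot>\<^sub>m proj \<psi>) x \<in> carrier_mat n n" if xin: "x \<in> set ps" for x
  proof -
    obtain p \<psi> where x: "x = (p,\<psi>)" by (cases x)
    have "dim_vec \<psi> = n" using pd xin x by blast
    then show ?thesis unfolding x by (intro carrier_matI) auto
  qed
  show "\<rho> \<in> carrier_mat n n" unfolding rho by (rule msum_carrier[OF c])
  fix i j assume ij: "i < n" "j < n"
  have "\<rho>$$(i,j) = (\<Sum>x\<leftarrow>ps. ((\<lambda>(p,\<psi>). complex_of_real p \<cdot>\<^sub>m proj \<psi>) x) $$ (i,j))"
    unfolding rho by (rule msum_index[OF c ij])
  also have "\<dots> = (\<Sum>(p,w)\<leftarrow>ps. complex_of_real p * w$i * cnj (w$j))"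
  proof (intro arg_cong[where f=sum_list] map_cong refl)
    fix x assume x: "x \<in> set ps"
    obtain p \<psi> where x0: "x = (p,\<psi>)" by (cases x)
    show "((\<lambda>(p,\<psi>). complex_of_real p \<cdot>\<^sub>m proj \<psi>) x) $$ (i,j) = (\<lambda>(p,w). complex_of_real p * w$i * cnj (w$j)) x"
      using pd[of p \<psi>] x ij unfolding x0 by simp
  qed
  finally show "\<rho>$$(i,j) = (\<Sum>(p,w)\<leftarrow>ps. complex_of_real p * w$i * cnj (w$j))" .
qed

lemma pure_decomp_density:
  assumes "pure_decomp n \<rho> ps"
  shows "density n \<rho>"
proof -
  note e = pure_decomp_entries[OF assms]
  have psd: "psd n \<rho>"
    by (rule psd_of_entries[OF e]) (use assms in \<open>auto simp: pure_decomp_def\<close>)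
  have "mtrace \<rho> = (\<Sum>i<n. \<Sum>(p,w)\<leftarrow>ps. complex_of_real p * w$i * cnj (w$i))"
    using e by (simp add: mtrace_def)
  also have "\<dots> = (\<Sum>(p,w)\<leftarrow>ps. \<Sum>i<n. complex_of_real p * w$i * cnj (w$i))"
    by (induction ps) (auto simp: sum.distrib)
  also have "\<dots> = (\<Sum>(p,w)\<leftarrow>ps. complex_of_real p)"
  proof (intro arg_cong[where f=sum_list] map_cong refl)
    fix x assume "x \<in> set ps"
    then obtain p w where x: "x = (p,w)" "unit_vec_c n w" using assms unfolding pure_decomp_def by auto
    have "(\<Sum>i<n. complex_of_real p * w$i * cnj (w$i)) = complex_of_real p * (\<Sum>i<n. complex_of_real ((cmod (w$i))^2))"
      unfolding sum_distrib_left by (rule sum.cong[OF refl]) (metis cnj_mult_self mult.assoc mult.commute)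
    also have "\<dots> = complex_of_real p" using x(2) unfolding unit_vec_c_def
      by (metis mult.right_neutral of_real_1 of_real_sum)
    finally show "(\<lambda>(p,w). \<Sum>i<n. complex_of_real p * w$i * cnj (w$i)) x = (\<lambda>(p,w). complex_of_real p) x"
      using x by simp
  qed
  also have "\<dots> = complex_of_real (\<Sum>(p,w)\<leftarrow>ps. p)"
    by (induction ps) auto
  also have "\<dots> = 1" using assms by (simp add: pure_decomp_def)
  finally show ?thesis using psd by (simp add: density_def)
qed


lemma sum_one:
  assumes "a < n" "\<And>j. j < n \<Longrightarrow> j \<noteq> a \<Longrightarrow> g j = 0"
  shows "(\<Sum>j<(n::nat). g j) = g a"
proof -
  have "(\<Sum>j<n. g j) = (\<Sum>j\<in>{a}. g j)"
    using assms by (intro sum.mono_neutral_right) auto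
  then show ?thesis by simp
qed

lemma sum_two:
  assumes "a < n" "b < n" "a \<noteq> b" "\<And>j. j < n \<Longrightarrow> j \<noteq> a \<Longrightarrow> j \<noteq> b \<Longrightarrow> g j = 0"
  shows "(\<Sum>j<(n::nat). g j) = g a + g b"
proof -
  have "(\<Sum>j<n. g j) = (\<Sum>j\<in>{a,b}. g j)"
    using assms by (intro sum.mono_neutral_right) auto
  then show ?thesis using assms by simp
qed

lemma qf_one:
  assumes "a < n"
  shows "qf n A (vec n (\<lambda>i. if i = a then x else 0)) = cnj x * A$$(a,a) * x"
proof -
  define v where "v = vec n (\<lambda>i. if i = a then x else 0)"
  have inner: "(\<Sum>j<n. cnj (v$i) * A$$(i,j) * v$j) = cnj (v$i) * A$$(i,a) * v$a" for i
    by (rule sum_one[OF assms]) (simp add: v_def)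
  have "qf n A v = (\<Sum>j<n. cnj (v$a) * A$$(a,j) * v$j)"
    unfolding qf_def by (rule sum_one[OF assms]) (simp add: v_def)
  also have "\<dots> = cnj (v$a) * A$$(a,a) * v$a" by (rule inner)
  finally show ?thesis using assms by (simp add: v_def)
qed

lemma qf_two:
  assumes "a < n" "b < n" "a \<noteq> b"
  shows "qf n A (vec n (\<lambda>i. if i = a then x else if i = b then y else 0)) =
    cnj x * A$$(a,a) * x + cnj x * A$$(a,b) * y + cnj y * A$$(b,a) * x + cnj y * A$$(b,b) * y"
proof -
  define v where "v = vec n (\<lambda>i. if i = a then x else if i = b then y else 0)"
  have inner: "(\<Sum>j<n. cnj (v$i) * A$$(i,j) * v$j) = cnj (v$i) * A$$(i,a) * v$a + cnj (v$i) * A$$(i,b) * v$b" for i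
    by (rule sum_two[OF assms]) (simp add: v_def)
  have "qf n A v = (\<Sum>j<n. cnj (v$a) * A$$(a,j) * v$j) + (\<Sum>j<n. cnj (v$b) * A$$(b,j) * v$j)"
    unfolding qf_def by (rule sum_two[OF assms]) (simp add: v_def)
  also have "\<dots> = cnj (v$a) * A$$(a,a) * v$a + cnj (v$a) * A$$(a,b) * v$b + (cnj (v$b) * A$$(b,a) * v$a + cnj (v$b) * A$$(b,b) * v$b)"
    by (simp only: inner)
  finally show ?thesis using assms by (simp add: v_def not_sym[OF assms(3)] add.assoc)
qed

lemma psd_diag:
  assumes "psd n A" "i < n"
  shows "Im (A$$(i,i)) = 0" "Re (A$$(i,i)) \<ge> 0"
proof -
  have "Im (qf n A (vec n (\<lambda>k. if k = i then 1 else 0))) = 0 \<and> Re (qf n A (vec n (\<lambda>k. if k = i then 1 else 0))) \<ge> 0"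
    using assms(1) by (simp add: psd_iff)
  then show "Im (A$$(i,i)) = 0" "Re (A$$(i,i)) \<ge> 0" using qf_one[OF assms(2), of A 1] by auto
qed

lemma psd_herm:
  assumes "psd n A" "i < n" "j < n"
  shows "A$$(i,j) = cnj (A$$(j,i))"
proof (cases "i = j")
  case True
  then show ?thesis using psd_diag[OF assms(1,2)] by (simp add: complex_eq_iff)
next
  case False
  have d: "Im (A$$(i,i)) = 0" "Im (A$$(j,j)) = 0" using psd_diag assms by auto
  have "Im (qf n A (vec n (\<lambda>k. if k = i then 1 else if k = j then 1 else 0))) = 0"
    using assms(1) by (simp add: psd_iff)
  then have 1: "Im (A$$(i,j)) + Im (A$$(j,i)) = 0"
    using qf_two[OF assms(2,3) False, of A 1 1] d by simp
  have "Im (qf n A (vec n (\<lambda>k. if k = i then 1 else if k = j then \<i> else 0))) = 0"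
    using assms(1) by (simp add: psd_iff)
  then have 2: "Re (A$$(i,j)) - Re (A$$(j,i)) = 0"
    using qf_two[OF assms(2,3) False, of A 1 \<i>] d by simp
  show ?thesis using 1 2 by (simp add: complex_eq_iff)
qed

lemma psd_zero_row:
  assumes "psd n A" "t < n" "j < n" "A$$(t,t) = 0"
  shows "A$$(t,j) = 0"
proof (rule ccontr)
  assume nz: "A$$(t,j) \<noteq> 0"
  then have tj: "t \<noteq> j" using assms by auto
  define z where "z = A$$(t,j)"
  define r where "r = (Re z)^2 + (Im z)^2"
  have r: "r > 0" using nz unfolding r_def z_def
    by (metis add_nonneg_pos complex_eq_iff sum_power2_gt_zero_iff zero_complex.sel)
  define c where "c = (Re (A$$(j,j)) + 1) / (2 * r)"
  have h: "A$$(j,t) = cnj z" using psd_herm[OF assms(1,3,2)] z_def by simp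
  have cz: "cnj z * z = complex_of_real r" by (simp add: r_def complex_mult_cnj mult.commute)
  have s1: "cnj (-(complex_of_real c * z)) * z = - complex_of_real (c*r)"
    using cz by (simp add: mult.assoc)
  have s2: "cnj z * (-(complex_of_real c * z)) = - complex_of_real (c*r)"
    using cz by (metis minus_mult_right mult.left_commute of_real_mult)
  have q: "qf n A (vec n (\<lambda>k. if k = t then - (complex_of_real c * z) else if k = j then 1 else 0))
     = A$$(j,j) - complex_of_real (2*c*r)"
    using qf_two[OF assms(2,3) tj, of A "- (complex_of_real c * z)" 1] assms(4) h
    using cz by (simp add: z_def[symmetric] s1 s2 mult.commute)
  have "Re (qf n A (vec n (\<lambda>k. if k = t then - (complex_of_real c * z) else if k = j then 1 else 0))) \<ge> 0"
    using assms(1) by (simp add: psd_iff)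
  also have "Re (qf n A (vec n (\<lambda>k. if k = t then - (complex_of_real c * z) else if k = j then 1 else 0)))
     = Re (A$$(j,j)) - 2 * c * r"
    unfolding q by simp
  also have "\<dots> = -1" using r unfolding c_def by (simp add: field_simps)
  finally show False by simp
qed

lemma sum_if_const: "(\<Sum>j\<in>A. if P then f j else 0) = (if P then (\<Sum>j\<in>A. f j) else 0)"
  by (cases P) auto

lemma qf_shift:
  assumes "t < n"
  shows "qf n A (vec n (\<lambda>i. x$i + (if i = t then s else 0))) =
     qf n A x + cnj s * (\<Sum>j<n. A$$(t,j) * x$j) + s * (\<Sum>i<n. cnj (x$i) * A$$(i,t)) + cnj s * s * A$$(t,t)"
proof -
  have pt: "cnj (vec n (\<lambda>i. x$i + (if i = t then s else 0)) $ i) * A$$(i,j) * (vec n (\<lambda>i. x$i + (if i = t then s else 0)) $ j)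
     = cnj (x$i) * A$$(i,j) * x$j + (if j = t then cnj (x$i) * A$$(i,t) * s else 0)
       + (if i = t then cnj s * (A$$(t,j) * x$j) else 0) + (if i = t then (if j = t then cnj s * s * A$$(t,t) else 0) else 0)"
    if "i < n" "j < n" for i j
    using that by (cases "i = t"; cases "j = t") (simp_all add: ring_distribs)
  have "qf n A (vec n (\<lambda>i. x$i + (if i = t then s else 0))) =
    (\<Sum>i<n. \<Sum>j<n. cnj (x$i) * A$$(i,j) * x$j + (if j = t then cnj (x$i) * A$$(i,t) * s else 0)
       + (if i = t then cnj s * (A$$(t,j) * x$j) else 0) + (if i = t then (if j = t then cnj s * s * A$$(t,t) else 0) else 0))"
    unfolding qf_def by (intro sum.cong refl pt) auto
  also have "\<dots> = qf n A x + (\<Sum>i<n. cnj (x$i) * A$$(i,t) * s) + cnj s * (\<Sum>j<n. A$$(t,j) * x$j) + cnj s * s * A$$(t,t)"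
    using assms by (simp add: sum.distrib qf_def sum_distrib_left sum_if_const)
  finally show ?thesis by (simp add: sum_distrib_left sum_distrib_right mult_ac)
qed


lemma psd_schur:
  assumes A: "psd n A" and t: "t < n" and a: "A$$(t,t) = complex_of_real a" "a > 0"
  shows "psd n (mat n n (\<lambda>(i,j). A$$(i,j) - A$$(i,t) * cnj (A$$(j,t)) / complex_of_real a))"
    (is "psd n ?A'")
proof -
  have Ac: "A \<in> carrier_mat n n" using A by (simp add: psd_iff)
  have "Im (qf n ?A' x) = 0 \<and> Re (qf n ?A' x) \<ge> 0" if x: "dim_vec x = n" for x
  proof -
    define B where "B = (\<Sum>j<n. cnj (A$$(j,t)) * x$j)"
    have cB: "(\<Sum>i<n. cnj (x$i) * A$$(i,t)) = cnj B" by (simp add: B_def mult.commute)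
    have q1: "qf n ?A' x = qf n A x - cnj B * B / complex_of_real a"
    proof -
      have "qf n ?A' x = (\<Sum>i<n. \<Sum>j<n. cnj (x$i) * A$$(i,j) * x$j - (cnj (x$i) * A$$(i,t)) * (cnj (A$$(j,t)) * x$j) / complex_of_real a)"
        unfolding qf_def by (intro sum.cong refl) (auto simp: algebra_simps)
      also have "\<dots> = qf n A x - (\<Sum>i<n. \<Sum>j<n. (cnj (x$i) * A$$(i,t)) * (cnj (A$$(j,t)) * x$j)) / complex_of_real a"
        by (simp add: qf_def sum_subtractf sum_divide_distrib)
      also have "(\<Sum>i<n. \<Sum>j<n. (cnj (x$i) * A$$(i,t)) * (cnj (A$$(j,t)) * x$j)) = (\<Sum>i<n. cnj (x$i) * A$$(i,t)) * (\<Sum>j<n. cnj (A$$(j,t)) * x$j)"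
        by (rule sum_product[symmetric])
      finally show ?thesis by (simp add: cB B_def)
    qed
    define s where "s = - B / complex_of_real a"
    have RB: "(\<Sum>j<n. A$$(t,j) * x$j) = B"
      unfolding B_def by (intro sum.cong refl) (simp add: psd_herm[OF A t])
    have q2: "qf n A (vec n (\<lambda>i. x$i + (if i = t then s else 0))) = qf n A x - cnj B * B / complex_of_real a"
      unfolding qf_shift[OF t] RB cB a(1) s_def using a(2)
      by (simp add: field_simps power2_eq_square)
    have "Im (qf n A (vec n (\<lambda>i. x$i + (if i = t then s else 0)))) = 0 \<and> Re (qf n A (vec n (\<lambda>i. x$i + (if i = t then s else 0)))) \<ge> 0"
      using A by (simp add: psd_iff)
    then show ?thesis using q1 q2 by simp
  qed
  then show ?thesis by (simp add: psd_iff)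
qed

lemma decomp_aux:
  "\<forall>A. psd n A \<longrightarrow> (\<forall>i<n. \<forall>j<n. (i < n - m \<or> j < n - m) \<longrightarrow> A$$(i,j) = 0) \<longrightarrow>
    (\<exists>vs. (\<forall>v\<in>set vs. dim_vec v = n) \<and> (\<forall>i<n. \<forall>j<n. A$$(i,j) = (\<Sum>v\<leftarrow>vs. v$i * cnj (v$j))))"
proof (induction m)
  case 0
  show ?case
  proof (intro allI impI)
    fix A assume "psd n A" "\<forall>i<n. \<forall>j<n. (i < n - 0 \<or> j < n - 0) \<longrightarrow> A$$(i,j) = 0"
    then show "\<exists>vs. (\<forall>v\<in>set vs. dim_vec v = n) \<and> (\<forall>i<n. \<forall>j<n. A$$(i,j) = (\<Sum>v\<leftarrow>vs. v$i * cnj (v$j)))"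
      by (intro exI[of _ "[]"]) auto
  qed
next
  case (Suc m)
  show ?case
  proof (intro allI impI)
    fix A assume A: "psd n A" and supp: "\<forall>i<n. \<forall>j<n. (i < n - Suc m \<or> j < n - Suc m) \<longrightarrow> A$$(i,j) = 0"
    show "\<exists>vs. (\<forall>v\<in>set vs. dim_vec v = n) \<and> (\<forall>i<n. \<forall>j<n. A$$(i,j) = (\<Sum>v\<leftarrow>vs. v$i * cnj (v$j)))"
    proof (cases "m < n")
      case False
      then have "n - Suc m = n - m" by simp
      then show ?thesis using Suc.IH A supp by auto
    next
      case True
      define t where "t = n - Suc m"
      have t: "t < n" "n - m = Suc t" using True by (auto simp: t_def)
      show ?thesis
      proof (cases "A$$(t,t) = 0")
        case True
        have "A$$(t,j) = 0" "A$$(j,t) = 0" if "j < n" for j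
          using psd_zero_row[OF A t(1) that True] psd_herm[OF A that t(1)] by auto
        then have "\<forall>i<n. \<forall>j<n. (i < n - m \<or> j < n - m) \<longrightarrow> A$$(i,j) = 0"
          using supp unfolding t(2) t_def[symmetric] by (metis less_SucE)
        then show ?thesis using Suc.IH A by auto
      next
        case False
        define a where "a = Re (A$$(t,t))"
        have at: "A$$(t,t) = complex_of_real a" using psd_diag[OF A t(1)] by (simp add: a_def complex_eq_iff)
        have apos: "a > 0" using psd_diag[OF A t(1)] False at unfolding a_def by (metis less_eq_real_def of_real_0)
        define A' where "A' = mat n n (\<lambda>(i,j). A$$(i,j) - A$$(i,t) * cnj (A$$(j,t)) / complex_of_real a)"
        have A': "psd n A'" unfolding A'_def by (rule psd_schur[OF A t(1) at apos])
        have "A'$$(i,j) = 0" if ij: "i < n" "j < n" "i < n - m \<or> j < n - m" for i j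
        proof -
          have "i < t \<or> i = t \<or> j < t \<or> j = t" using ij t by auto
          moreover have "A$$(i,j) = 0" if "i < t \<or> j < t" using supp ij that t_def by auto
          moreover have "A$$(i,t) = 0" if "i < t" using supp ij that t_def t by auto
          moreover have "A$$(j,t) = 0" if "j < t" using supp ij that t_def t by auto
          moreover have "cnj (A$$(j,t)) = A$$(t,j)" using psd_herm[OF A t(1) ij(2)] by simp
          moreover have "cnj (A$$(t,t)) = complex_of_real a" using at by simp
          ultimately show ?thesis unfolding A'_def using ij apos at by auto
        qed
        then obtain vs where vs: "\<forall>v\<in>set vs. dim_vec v = n" "\<forall>i<n. \<forall>j<n. A'$$(i,j) = (\<Sum>v\<leftarrow>vs. v$i * cnj (v$j))"
          using Suc.IH A' by blast
        define v where "v = vec n (\<lambda>i. A$$(i,t) / complex_of_real (sqrt a))"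
        have "A$$(i,j) = (\<Sum>v\<leftarrow>v#vs. v$i * cnj (v$j))" if ij: "i < n" "j < n" for i j
        proof -
          have sa: "complex_of_real (sqrt a) * complex_of_real (sqrt a) = complex_of_real a"
            using apos by (metis of_real_mult real_sqrt_mult_self abs_of_pos)
          have "v$i * cnj (v$j) = A$$(i,t) * cnj (A$$(j,t)) / (complex_of_real (sqrt a) * complex_of_real (sqrt a))"
            using ij by (simp add: v_def times_divide_times_eq)
          then have "v$i * cnj (v$j) = A$$(i,t) * cnj (A$$(j,t)) / complex_of_real a"
            by (simp only: sa)
          moreover have "A$$(i,j) - A$$(i,t) * cnj (A$$(j,t)) / complex_of_real a = (\<Sum>v\<leftarrow>vs. v$i * cnj (v$j))"
            using vs(2) ij unfolding A'_def by simp
          ultimately show ?thesis by (simp add: diff_eq_eq)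
        qed
        then show ?thesis using vs(1) by (intro exI[of _ "v#vs"]) (auto simp: v_def)
      qed
    qed
  qed
qed

lemma psd_decomp:
  assumes "psd n A"
  shows "\<exists>vs. (\<forall>v\<in>set vs. dim_vec v = n) \<and> (\<forall>i<n. \<forall>j<n. A$$(i,j) = (\<Sum>v\<leftarrow>vs. v$i * cnj (v$j)))"
  using decomp_aux[of n n] assms by auto


definition nsq :: "complex vec \<Rightarrow> real" where
  "nsq w = (\<Sum>i<dim_vec w. (cmod (w$i))^2)"

definition nrm :: "complex vec \<Rightarrow> complex vec" where
  "nrm w = vec (dim_vec w) (\<lambda>i. w$i / complex_of_real (sqrt (nsq w)))"

lemma nsq_nonneg: "nsq w \<ge> 0" unfolding nsq_def by (intro sum_nonneg) auto

lemma nsq_zero: "nsq w = 0 \<Longrightarrow> i < dim_vec w \<Longrightarrow> w$i = 0"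
  unfolding nsq_def by (subst (asm) sum_nonneg_eq_0_iff) auto

lemma nrm_dim[simp]: "dim_vec (nrm w) = dim_vec w" by (simp add: nrm_def)

lemma nrm_unit: assumes "nsq w > 0" shows "unit_vec_c (dim_vec w) (nrm w)"
proof -
  have "(\<Sum>i<dim_vec w. (cmod (nrm w $ i))^2) = (\<Sum>i<dim_vec w. (cmod (w$i))^2 / nsq w)"
    using assms by (intro sum.cong refl) (simp add: nrm_def norm_divide power_divide)
  also have "\<dots> = 1" using assms by (simp add: sum_divide_distrib[symmetric] nsq_def)
  finally show ?thesis by (simp add: unit_vec_c_def)
qed

lemma nrm_nz: "i < dim_vec w \<Longrightarrow> nsq w > 0 \<Longrightarrow> nrm w $ i \<noteq> 0 \<longleftrightarrow> w $ i \<noteq> 0"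
  by (simp add: nrm_def)

lemma nrm_entries:
  assumes "nsq w > 0" "i < dim_vec w" "j < dim_vec w"
  shows "complex_of_real (p * nsq w) * nrm w $ i * cnj (nrm w $ j) = complex_of_real p * w$i * cnj (w$j)"
proof -
  define c where "c = complex_of_real (sqrt (nsq w))"
  have cc: "c * c = complex_of_real (nsq w)"
    unfolding c_def using assms(1) by (metis of_real_mult real_sqrt_mult_self abs_of_pos)
  have nz: "complex_of_real (nsq w) \<noteq> 0" using assms(1) by simp
  have "nrm w $ i * cnj (nrm w $ j) = w$i * cnj (w$j) / (c * c)"
    using assms by (simp add: nrm_def times_divide_times_eq c_def)
  then have "nrm w $ i * cnj (nrm w $ j) = w$i * cnj (w$j) / complex_of_real (nsq w)"
    by (simp only: cc)
  then have "complex_of_real (p * nsq w) * (nrm w $ i * cnj (nrm w $ j)) = complex_of_real p * (w$i * cnj (w$j))"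
    using nz by simp
  then show ?thesis by (simp only: mult.assoc)
qed

lemma mk_decomp:
  fixes ws :: "(real \<times> complex vec) list"
  assumes rc: "\<rho> \<in> carrier_mat n n"
    and ent: "\<And>i j. i < n \<Longrightarrow> j < n \<Longrightarrow> \<rho>$$(i,j) = (\<Sum>(p,w)\<leftarrow>ws. complex_of_real p * w$i * cnj (w$j))"
    and tr: "mtrace \<rho> = 1"
    and pos: "\<And>p w. (p,w) \<in> set ws \<Longrightarrow> p \<ge> 0 \<and> dim_vec w = n"
    and Q: "\<And>p w. (p,w) \<in> set ws \<Longrightarrow> p > 0 \<Longrightarrow> nsq w > 0 \<Longrightarrow> Q (nrm w)"
  shows "\<exists>ps. pure_decomp n \<rho> ps \<and> (\<forall>(p,\<psi>)\<in>set ps. Q \<psi>)"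
proof -
  define P where "P = (\<lambda>(p::real,w). p > 0 \<and> nsq w > 0)"
  define ws' where "ws' = filter P ws"
  define ps where "ps = map (\<lambda>(p,w). (p * nsq w, nrm w)) ws'"
  have ws'sub: "set ws' \<subseteq> set ws" by (auto simp: ws'_def)
  have ws'P: "\<And>p w. (p,w) \<in> set ws' \<Longrightarrow> p > 0 \<and> nsq w > 0 \<and> dim_vec w = n"
    using pos by (auto simp: ws'_def P_def)
  have ent': "\<rho>$$(i,j) = (\<Sum>(p,w)\<leftarrow>ws'. complex_of_real p * w$i * cnj (w$j))" if ij: "i < n" "j < n" for i j
  proof -
    have "(\<Sum>(p,w)\<leftarrow>ws'. complex_of_real p * w$i * cnj (w$j)) = (\<Sum>(p,w)\<leftarrow>ws. complex_of_real p * w$i * cnj (w$j))"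
      unfolding ws'_def
    proof (rule sum_list_map_filter)
      fix x assume x: "x \<in> set ws" "\<not> P x"
      obtain p w where pw: "x = (p,w)" by (cases x)
      have "p = 0 \<or> nsq w = 0" using x pos[of p w] nsq_nonneg[of w] unfolding pw P_def by auto
      then show "(\<lambda>(p,w). complex_of_real p * w$i * cnj (w$j)) x = 0"
        using nsq_zero[of w i] pos[of p w] x ij unfolding pw by auto
    qed
    then show ?thesis using ent[OF ij] by simp
  qed
  have ent2: "(\<Sum>(p,w)\<leftarrow>ps. complex_of_real p * w$i * cnj (w$j)) = (\<Sum>(p,w)\<leftarrow>ws'. complex_of_real p * w$i * cnj (w$j))"
    if ij: "i < n" "j < n" for i j
    unfolding ps_def map_map
  proof (intro arg_cong[where f=sum_list] map_cong refl)
    fix x assume "x \<in> set ws'"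
    moreover obtain p w where x0: "x = (p,w)" by (cases x)
    ultimately have x: "x = (p,w)" "p > 0" "nsq w > 0" "dim_vec w = n" using ws'P by auto
    show "((\<lambda>(p,w). complex_of_real p * w$i * cnj (w$j)) \<circ> (\<lambda>(p,w). (p * nsq w, nrm w))) x =
          (\<lambda>(p,w). complex_of_real p * w$i * cnj (w$j)) x"
      using nrm_entries[of w i j p] x ij by simp
  qed
  have trsum: "mtrace \<rho> = complex_of_real (\<Sum>(p,w)\<leftarrow>ws'. p * nsq w)"
  proof -
    have "mtrace \<rho> = (\<Sum>i<n. \<Sum>(p,w)\<leftarrow>ws'. complex_of_real p * w$i * cnj (w$i))"
      using rc ent' by (simp add: mtrace_def)
    also have "\<dots> = (\<Sum>(p,w)\<leftarrow>ws'. \<Sum>i<n. complex_of_real p * w$i * cnj (w$i))"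
      by (induction ws') (auto simp: sum.distrib)
    also have "\<dots> = (\<Sum>(p,w)\<leftarrow>ws'. complex_of_real (p * nsq w))"
    proof (intro arg_cong[where f=sum_list] map_cong refl)
      fix x assume "x \<in> set ws'"
      moreover obtain p w where x0: "x = (p,w)" by (cases x)
      ultimately have x: "x = (p,w)" "dim_vec w = n" using ws'P by auto
      have "(\<Sum>i<n. complex_of_real p * w$i * cnj (w$i)) = (\<Sum>i<n. complex_of_real p * complex_of_real ((cmod (w$i))^2))"
        by (rule sum.cong[OF refl]) (metis cnj_mult_self mult.assoc mult.commute)
      also have "\<dots> = complex_of_real (p * nsq w)" using x(2)
        by (simp add: nsq_def sum_distrib_left)
      finally show "(\<lambda>(p,w). \<Sum>i<n. complex_of_real p * w$i * cnj (w$i)) x = (\<lambda>(p,w). complex_of_real (p * nsq w)) x"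
        using x by simp
    qed
    also have "\<dots> = complex_of_real (\<Sum>(p,w)\<leftarrow>ws'. p * nsq w)"
      by (induction ws') auto
    finally show ?thesis .
  qed
  have wsum: "(\<Sum>(p,\<psi>)\<leftarrow>ps. p) = 1"
  proof -
    have "(\<Sum>(p,\<psi>)\<leftarrow>ps. p) = (\<Sum>(p,w)\<leftarrow>ws'. p * nsq w)"
      unfolding ps_def map_map by (intro arg_cong[where f=sum_list] map_cong refl) auto
    then show ?thesis using trsum tr by simp
  qed
  have ne: "ps \<noteq> []" using wsum by auto
  have props: "\<forall>(p,\<psi>)\<in>set ps. p > 0 \<and> unit_vec_c n \<psi>"
    using ws'P nrm_unit unfolding ps_def by fastforce
  have eq: "\<rho> = msum n (\<lambda>(p,\<psi>). complex_of_real p \<cdot>\<^sub>m proj \<psi>) ps"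
  proof -
    have pd: "pure_decomp n (msum n (\<lambda>(p,\<psi>). complex_of_real p \<cdot>\<^sub>m proj \<psi>) ps) ps"
      using ne props wsum by (simp add: pure_decomp_def)
    note e = pure_decomp_entries[OF pd]
    show ?thesis
      by (rule eq_matI) (use rc e ent' ent2 in auto)
  qed
  have "\<forall>(p,\<psi>)\<in>set ps. Q \<psi>"
    using Q ws'P ws'sub unfolding ps_def by fastforce
  then show ?thesis using ne props wsum eq by (intro exI[of _ ps]) (simp add: pure_decomp_def)
qed

lemma density_decomp:
  assumes "density n \<rho>"
  shows "\<exists>ps. pure_decomp n \<rho> ps"
proof -
  have "\<exists>vs. (\<forall>v\<in>set vs. dim_vec v = n) \<and> (\<forall>i<n. \<forall>j<n. \<rho>$$(i,j) = (\<Sum>v\<leftarrow>vs. v$i * cnj (v$j)))"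
    using psd_decomp assms by (auto simp: density_def)
  then obtain vs where vs: "\<forall>v\<in>set vs. dim_vec v = n" "\<forall>i<n. \<forall>j<n. \<rho>$$(i,j) = (\<Sum>v\<leftarrow>vs. v$i * cnj (v$j))"
    by blast
  have e: "(\<Sum>v\<leftarrow>vs. v$i * cnj (v$j)) = (\<Sum>(p,w)\<leftarrow>map (\<lambda>v. (1::real, v)) vs. complex_of_real p * w$i * cnj (w$j))" for i j
    by (simp add: o_def)
  have "\<exists>ps. pure_decomp n \<rho> ps \<and> (\<forall>(p,\<psi>)\<in>set ps. True)"
    by (rule mk_decomp[where ws="map (\<lambda>v. (1::real, v)) vs"])
       (use assms vs e in \<open>auto simp: density_def psd_iff\<close>)
  then show ?thesis by auto
qed


section \<open>Kraus maps\<close>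

definition kraus :: "nat \<Rightarrow> nat \<Rightarrow> (nat \<Rightarrow> nat \<Rightarrow> nat \<Rightarrow> complex) \<Rightarrow> nat set \<Rightarrow> complex mat \<Rightarrow> complex mat" where
  "kraus n m K L X = mat m m (\<lambda>(i,j). \<Sum>l\<in>L. \<Sum>a<n. \<Sum>b<n. K l i a * X$$(a,b) * cnj (K l j b))"

lemma kraus_carrier[simp]: "kraus n m K L X \<in> carrier_mat m m"
  by (simp add: kraus_def)

lemma kraus_dim[simp]: "dim_row (kraus n m K L X) = m" "dim_col (kraus n m K L X) = m"
  by (simp_all add: kraus_def)

lemma kraus_index: "i < m \<Longrightarrow> j < m \<Longrightarrow> kraus n m K L X $$ (i,j) = (\<Sum>l\<in>L. \<Sum>a<n. \<Sum>b<n. K l i a * X$$(a,b) * cnj (K l j b))"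
  by (simp add: kraus_def)

lemma swap4:
  "(\<Sum>i\<in>A. \<Sum>j\<in>B. \<Sum>c\<in>C. \<Sum>e\<in>E. f i j c e) = (\<Sum>c\<in>C. \<Sum>e\<in>E. \<Sum>i\<in>A. \<Sum>j\<in>B. f i j c e)"
proof -
  have "(\<Sum>i\<in>A. \<Sum>j\<in>B. \<Sum>c\<in>C. \<Sum>e\<in>E. f i j c e) = (\<Sum>i\<in>A. \<Sum>c\<in>C. \<Sum>j\<in>B. \<Sum>e\<in>E. f i j c e)"
    by (rule sum.cong[OF refl], rule sum.swap)
  also have "\<dots> = (\<Sum>c\<in>C. \<Sum>i\<in>A. \<Sum>j\<in>B. \<Sum>e\<in>E. f i j c e)"
    by (rule sum.swap)
  also have "\<dots> = (\<Sum>c\<in>C. \<Sum>i\<in>A. \<Sum>e\<in>E. \<Sum>j\<in>B. f i j c e)"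
    by (rule sum.cong[OF refl], rule sum.cong[OF refl], rule sum.swap)
  also have "\<dots> = (\<Sum>c\<in>C. \<Sum>e\<in>E. \<Sum>i\<in>A. \<Sum>j\<in>B. f i j c e)"
    by (rule sum.cong[OF refl], rule sum.swap)
  finally show ?thesis .
qed

lemma kraus_qf:
  "qf m (kraus n m K L X) u = (\<Sum>l\<in>L. qf n X (vec n (\<lambda>c. \<Sum>j<m. cnj (K l j c) * u$j)))"
proof -
  have "qf m (kraus n m K L X) u = (\<Sum>i<m. \<Sum>j<m. \<Sum>l\<in>L. cnj (u$i) * (\<Sum>a<n. \<Sum>b<n. K l i a * X$$(a,b) * cnj (K l j b)) * u$j)"
    unfolding qf_def by (intro sum.cong refl) (simp add: kraus_index sum_distrib_left sum_distrib_right)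
  also have "\<dots> = (\<Sum>i<m. \<Sum>l\<in>L. \<Sum>j<m. cnj (u$i) * (\<Sum>a<n. \<Sum>b<n. K l i a * X$$(a,b) * cnj (K l j b)) * u$j)"
    by (rule sum.cong[OF refl], rule sum.swap)
  also have "\<dots> = (\<Sum>l\<in>L. \<Sum>i<m. \<Sum>j<m. cnj (u$i) * (\<Sum>a<n. \<Sum>b<n. K l i a * X$$(a,b) * cnj (K l j b)) * u$j)"
    by (rule sum.swap)
  also have "\<dots> = (\<Sum>l\<in>L. qf n X (vec n (\<lambda>c. \<Sum>j<m. cnj (K l j c) * u$j)))"
  proof (rule sum.cong[OF refl])
    fix l
    have "(\<Sum>i<m. \<Sum>j<m. cnj (u$i) * (\<Sum>a<n. \<Sum>b<n. K l i a * X$$(a,b) * cnj (K l j b)) * u$j)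
        = (\<Sum>i<m. \<Sum>j<m. \<Sum>a<n. \<Sum>b<n. (cnj (u$i) * K l i a) * X$$(a,b) * (cnj (K l j b) * u$j))"
      by (simp add: sum_distrib_left sum_distrib_right mult_ac)
    also have "\<dots> = (\<Sum>a<n. \<Sum>b<n. \<Sum>i<m. \<Sum>j<m. (cnj (u$i) * K l i a) * X$$(a,b) * (cnj (K l j b) * u$j))"
      by (rule swap4)
    also have "\<dots> = (\<Sum>a<n. \<Sum>b<n. (\<Sum>i<m. cnj (u$i) * K l i a) * X$$(a,b) * (\<Sum>j<m. cnj (K l j b) * u$j))"
      by (simp add: sum_distrib_left sum_distrib_right mult_ac)
    also have "\<dots> = qf n X (vec n (\<lambda>c. \<Sum>j<m. cnj (K l j c) * u$j))"
      unfolding qf_def by (intro sum.cong refl) (simp add: mult.commute)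
    finally show "(\<Sum>i<m. \<Sum>j<m. cnj (u$i) * (\<Sum>a<n. \<Sum>b<n. K l i a * X$$(a,b) * cnj (K l j b)) * u$j)
        = qf n X (vec n (\<lambda>c. \<Sum>j<m. cnj (K l j c) * u$j))" .
  qed
  finally show ?thesis .
qed

lemma kraus_psd:
  assumes "psd n X"
  shows "psd m (kraus n m K L X)"
proof -
  have "Im (qf m (kraus n m K L X) u) = 0 \<and> Re (qf m (kraus n m K L X) u) \<ge> 0" for u
  proof -
    have h: "Im (qf n X v) = 0 \<and> Re (qf n X v) \<ge> 0" if "dim_vec v = n" for v
      using assms that by (simp add: psd_iff)
    show ?thesis unfolding kraus_qf Im_sum Re_sum using h by (simp add: sum_nonneg)
  qed
  then show ?thesis by (simp add: psd_iff)
qed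

lemma kraus_trace:
  assumes X: "X \<in> carrier_mat n n" and L: "finite L"
    and tp: "\<And>a b. a < n \<Longrightarrow> b < n \<Longrightarrow> (\<Sum>l\<in>L. \<Sum>r<m. cnj (K l r b) * K l r a) = (if a = b then 1 else 0)"
  shows "mtrace (kraus n m K L X) = mtrace X"
proof -
  have "mtrace (kraus n m K L X) = (\<Sum>i<m. \<Sum>l\<in>L. \<Sum>a<n. \<Sum>b<n. K l i a * X$$(a,b) * cnj (K l i b))"
    by (simp add: mtrace_def kraus_index)
  also have "\<dots> = (\<Sum>a<n. \<Sum>b<n. \<Sum>i<m. \<Sum>l\<in>L. K l i a * X$$(a,b) * cnj (K l i b))"
    by (rule swap4)
  also have "\<dots> = (\<Sum>a<n. \<Sum>b<n. X$$(a,b) * (\<Sum>l\<in>L. \<Sum>i<m. cnj (K l i b) * K l i a))"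
  proof (intro sum.cong refl)
    fix a b
    have "(\<Sum>i<m. \<Sum>l\<in>L. K l i a * X$$(a,b) * cnj (K l i b)) = (\<Sum>l\<in>L. \<Sum>i<m. K l i a * X$$(a,b) * cnj (K l i b))"
      by (rule sum.swap)
    then show "(\<Sum>i<m. \<Sum>l\<in>L. K l i a * X$$(a,b) * cnj (K l i b)) = X$$(a,b) * (\<Sum>l\<in>L. \<Sum>i<m. cnj (K l i b) * K l i a)"
      by (simp add: sum_distrib_left mult_ac)
  qed
  also have "\<dots> = (\<Sum>a<n. \<Sum>b<n. if b = a then X$$(a,b) else 0)"
    by (intro sum.cong refl) (auto simp: tp)
  also have "\<dots> = mtrace X" using X by (simp add: mtrace_def)
  finally show ?thesis .
qed

lemma kraus_linear:
  assumes "X \<in> carrier_mat n n" "Y \<in> carrier_mat n n"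
  shows "kraus n m K L (c \<cdot>\<^sub>m X + Y) = c \<cdot>\<^sub>m kraus n m K L X + kraus n m K L Y"
proof (rule eq_matI)
  fix i j assume ij: "i < dim_row (c \<cdot>\<^sub>m kraus n m K L X + kraus n m K L Y)" "j < dim_col (c \<cdot>\<^sub>m kraus n m K L X + kraus n m K L Y)"
  then have ij': "i < m" "j < m" by auto
  have pt: "K l i a * (c \<cdot>\<^sub>m X + Y)$$(a,b) * cnj (K l j b) = c * (K l i a * X$$(a,b) * cnj (K l j b)) + K l i a * Y$$(a,b) * cnj (K l j b)"
    if "a < n" "b < n" for l a b
    using assms that by (simp add: algebra_simps)
  show "kraus n m K L (c \<cdot>\<^sub>m X + Y) $$ (i,j) = (c \<cdot>\<^sub>m kraus n m K L X + kraus n m K L Y) $$ (i,j)"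
    using ij' by (simp add: kraus_index pt sum.distrib sum_distrib_left)
qed auto

definition Kt :: "nat \<Rightarrow> nat \<Rightarrow> (nat \<Rightarrow> nat \<Rightarrow> nat \<Rightarrow> complex) \<Rightarrow> nat \<Rightarrow> nat \<Rightarrow> nat \<Rightarrow> complex" where
  "Kt n m K l i c = (if i div m = c div n then K l (i mod m) (c mod n) else 0)"

lemma id_tensor_kraus_entry:
  assumes i: "i < k*m" and j: "j < k*m"
  shows "(\<Sum>a<k*n. \<Sum>b<k*n. Kt n m K l i a * X$$(a,b) * cnj (Kt n m K l j b)) =
         (\<Sum>a<n. \<Sum>b<n. K l (i mod m) a * X$$((i div m)*n + a, (j div m)*n + b) * cnj (K l (j mod m) b))"
proof -
  have im: "i div m < k" using i by (simp add: less_mult_imp_div_less)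
  have jm: "j div m < k" using j by (simp add: less_mult_imp_div_less)
  have inner: "(\<Sum>b<k*n. Kt n m K l i a * X$$(a,b) * cnj (Kt n m K l j b)) =
     (\<Sum>b<n. Kt n m K l i a * X$$(a,(j div m)*n + b) * cnj (K l (j mod m) b))" for a
  proof -
    have "(\<Sum>b<k*n. Kt n m K l i a * X$$(a,b) * cnj (Kt n m K l j b)) =
       (\<Sum>Q<k. \<Sum>b<n. Kt n m K l i a * X$$(a,Q*n+b) * cnj (Kt n m K l j (Q*n+b)))"
      by (rule sum_prod_split)
    also have "\<dots> = (\<Sum>b<n. Kt n m K l i a * X$$(a,(j div m)*n+b) * cnj (Kt n m K l j ((j div m)*n+b)))"
      by (rule sum_one[OF jm]) (auto intro!: sum.neutral simp: Kt_def)
    also have "\<dots> = (\<Sum>b<n. Kt n m K l i a * X$$(a,(j div m)*n + b) * cnj (K l (j mod m) b))"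
      by (intro sum.cong refl) (simp add: Kt_def)
    finally show ?thesis .
  qed
  have "(\<Sum>a<k*n. \<Sum>b<k*n. Kt n m K l i a * X$$(a,b) * cnj (Kt n m K l j b)) =
     (\<Sum>a<k*n. \<Sum>b<n. Kt n m K l i a * X$$(a,(j div m)*n + b) * cnj (K l (j mod m) b))"
    by (simp only: inner)
  also have "\<dots> = (\<Sum>P<k. \<Sum>a<n. \<Sum>b<n. Kt n m K l i (P*n+a) * X$$(P*n+a,(j div m)*n + b) * cnj (K l (j mod m) b))"
    by (rule sum_prod_split)
  also have "\<dots> = (\<Sum>a<n. \<Sum>b<n. Kt n m K l i ((i div m)*n+a) * X$$((i div m)*n+a,(j div m)*n + b) * cnj (K l (j mod m) b))"
    by (rule sum_one[OF im]) (auto intro!: sum.neutral simp: Kt_def)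
  also have "\<dots> = (\<Sum>a<n. \<Sum>b<n. K l (i mod m) a * X$$((i div m)*n + a, (j div m)*n + b) * cnj (K l (j mod m) b))"
    by (intro sum.cong refl) (simp add: Kt_def)
  finally show ?thesis .
qed

lemma id_tensor_kraus:
  "id_tensor k n m (kraus n m K L) X = kraus (k*n) (k*m) (Kt n m K) L X"
proof (rule eq_matI)
  fix i j assume "i < dim_row (kraus (k*n) (k*m) (Kt n m K) L X)" "j < dim_col (kraus (k*n) (k*m) (Kt n m K) L X)"
  then have ij: "i < k*m" "j < k*m" by auto
  have m: "0 < m" using ij by (cases m) auto
  have "id_tensor k n m (kraus n m K L) X $$ (i,j) = kraus n m K L (block n X (i div m) (j div m)) $$ (i mod m, j mod m)"
    using ij by (simp add: id_tensor_def)
  also have "\<dots> = (\<Sum>l\<in>L. \<Sum>a<n. \<Sum>b<n. K l (i mod m) a * X$$((i div m)*n + a, (j div m)*n + b) * cnj (K l (j mod m) b))"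
    using m by (simp add: kraus_index block_def)
  also have "\<dots> = kraus (k*n) (k*m) (Kt n m K) L X $$ (i,j)"
    using ij by (simp add: kraus_index id_tensor_kraus_entry)
  finally show "id_tensor k n m (kraus n m K L) X $$ (i,j) = kraus (k*n) (k*m) (Kt n m K) L X $$ (i,j)" .
qed (auto simp: id_tensor_def)

lemma kraus_cptp:
  assumes L: "finite L"
    and tp: "\<And>a b. a < n \<Longrightarrow> b < n \<Longrightarrow> (\<Sum>l\<in>L. \<Sum>r<m. cnj (K l r b) * K l r a) = (if a = b then 1 else 0)"
  shows "cptp n m (kraus n m K L)"
  unfolding cptp_def
  using kraus_linear kraus_trace[OF _ L tp] kraus_psd id_tensor_kraus by auto

lemma kraus_density:
  assumes "density n X" "finite L"
    and tp: "\<And>a b. a < n \<Longrightarrow> b < n \<Longrightarrow> (\<Sum>l\<in>L. \<Sum>r<m. cnj (K l r b) * K l r a) = (if a = b then 1 else 0)"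
  shows "density m (kraus n m K L X)"
  using assms kraus_psd kraus_trace[OF _ assms(2) tp] by (auto simp: density_def psd_iff)

lemma cptp_cong:
  assumes "\<And>X. X \<in> carrier_mat n n \<Longrightarrow> \<Phi> X = \<Psi> X" "cptp n m \<Psi>"
  shows "cptp n m \<Phi>"
proof -
  have bl: "block n X a b \<in> carrier_mat n n" for X a b by (simp add: block_def)
  have "id_tensor k n m \<Phi> X = id_tensor k n m \<Psi> X" for k X
    unfolding id_tensor_def using assms(1)[OF bl] by simp
  moreover have "c \<cdot>\<^sub>m X + Y \<in> carrier_mat n n" if "X \<in> carrier_mat n n" "Y \<in> carrier_mat n n" for X Y c
    using that by auto
  ultimately show ?thesis using assms unfolding cptp_def by simp
qed


section \<open>Digits and producibility\<close>

lemma digit_Cons_Suc: "digit (d#ds) x (Suc i) = digit ds x i"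
  by (simp add: digit_def)

lemma digit_Cons_0: "digit (d#ds) x 0 = (x div prod_list ds) mod d"
  by (simp add: digit_def)

lemma prod_list_drop_dvd: "i < length (ds::nat list) \<Longrightarrow> prod_list (drop (Suc i) ds) * (ds ! i) dvd prod_list ds"
proof -
  assume i: "i < length ds"
  have "ds = take i ds @ (ds ! i) # drop (Suc i) ds" using i by (simp add: id_take_nth_drop)
  then have "prod_list ds = prod_list (take i ds) * ((ds ! i) * prod_list (drop (Suc i) ds))"
    by (metis prod_list.Cons prod_list.append)
  then show ?thesis
    using dvd_triv_right[of "prod_list (drop (Suc i) ds) * ds ! i" "prod_list (take i ds)"] by (simp add: ac_simps)
qed

lemma digit_mod: "i < length ds \<Longrightarrow> digit ds (x mod prod_list ds) i = digit ds x i"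
proof -
  assume i: "i < length ds"
  define Q where "Q = prod_list (drop (Suc i) ds)"
  define r where "r = ds ! i"
  obtain R where R: "prod_list ds = Q * r * R" using prod_list_drop_dvd[OF i] unfolding Q_def r_def by (auto elim: dvdE)
  have gen: "(x mod (Q * M)) div Q = x div Q mod M" for M
    by (cases "Q = 0") (simp_all add: mod_mult2_eq)
  have "(x mod (Q * (r * R))) div Q = x div Q mod (r * R)"
    by (rule gen)
  then have "(x mod prod_list ds) div Q mod r = x div Q mod (r*R) mod r" by (simp add: R mult.assoc)
  also have "\<dots> = x div Q mod r" by (simp add: mod_mod_cancel)
  finally show ?thesis by (simp add: digit_def Q_def r_def)
qed

lemma digit_unique:
  "x < prod_list dims \<Longrightarrow> y < prod_list dims \<Longrightarrow> (\<And>i. i < length dims \<Longrightarrow> digit dims x i = digit dims y i) \<Longrightarrow> x = y"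
proof (induction dims arbitrary: x y)
  case Nil then show ?case by simp
next
  case (Cons d ds)
  define P where "P = prod_list ds"
  have d0: "(x div P) mod d = (y div P) mod d" using Cons.prems(3)[of 0] by (simp add: digit_Cons_0 P_def)
  have xd: "x div P < d" "y div P < d" using Cons.prems(1,2) unfolding P_def
    by (simp_all add: less_mult_imp_div_less mult.commute)
  have "x div P = y div P" using d0 xd by simp
  moreover have "x mod P = y mod P"
  proof (cases "P = 0")
    case True then show ?thesis using Cons.prems(1) by (simp add: P_def)
  next
    case False
    show ?thesis unfolding P_def
    proof (rule Cons.IH)
      show "x mod prod_list ds < prod_list ds" "y mod prod_list ds < prod_list ds"
        using False by (simp_all add: P_def)
      fix i assume "i < length ds"
      then show "digit ds (x mod prod_list ds) i = digit ds (y mod prod_list ds) i"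
        using Cons.prems(3)[of "Suc i"] by (simp add: digit_mod digit_Cons_Suc)
    qed
  qed
  ultimately show ?case by (metis div_mult_mod_eq)
qed

lemma producible_of_support:
  assumes w: "unit_vec_c (prod_list dims) w"
    and B: "B \<subseteq> {..<length dims}" "B \<noteq> {}" "card B \<le> k" "1 \<le> k"
    and supp: "\<And>x j. x < prod_list dims \<Longrightarrow> w$x \<noteq> 0 \<Longrightarrow> j < length dims \<Longrightarrow> j \<notin> B \<Longrightarrow> digit dims x j = 0"
  shows "k_producible_pure dims k w"
proof -
  define N where "N = prod_list dims"
  define J where "J = {j. j < length dims \<and> j \<notin> B}"
  define S where "S = (\<lambda>j. {j}) ` J"
  define P where "P = insert B S"
  define \<phi> where "\<phi> = (\<lambda>C (f::nat\<Rightarrow>nat). if C = B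
      then (\<Sum>x\<in>{x. x < N \<and> (\<forall>j<length dims. digit dims x j = (if j \<in> B then f j else 0))}. w$x)
      else (if f (the_elem C) = 0 then 1 else (0::complex)))"
  have finJ: "finite J" by (simp add: J_def)
  have BS: "B \<notin> S" unfolding S_def J_def using B(2) by auto
  have part: "k_partition (length dims) k P"
    unfolding k_partition_def
  proof (intro conjI ballI impI)
    show "\<Union>P = {..<length dims}" using B(1) by (auto simp: P_def S_def J_def)
  next
    fix C assume "C \<in> P" then show "C \<noteq> {}" using B(2) by (auto simp: P_def S_def)
  next
    fix C assume "C \<in> P" then show "card C \<le> k" using B(3,4) by (auto simp: P_def S_def)
  next
    fix C D assume "C \<in> P" "D \<in> P" "C \<noteq> D" then show "C \<inter> D = {}"
      by (auto simp: P_def S_def J_def)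
  qed
  have prodeq: "w $ x = (\<Prod>C\<in>P. \<phi> C (\<lambda>j. if j \<in> C then digit dims x j else 0))" if x: "x < N" for x
  proof -
    have "(\<Prod>C\<in>P. \<phi> C (\<lambda>j. if j \<in> C then digit dims x j else 0))
       = \<phi> B (\<lambda>j. if j \<in> B then digit dims x j else 0) * (\<Prod>C\<in>S. \<phi> C (\<lambda>j. if j \<in> C then digit dims x j else 0))"
      unfolding P_def using BS finJ by (simp add: S_def)
    also have "(\<Prod>C\<in>S. \<phi> C (\<lambda>j. if j \<in> C then digit dims x j else 0)) = (\<Prod>j\<in>J. if digit dims x j = 0 then 1 else 0)"
      unfolding S_def by (subst prod.reindex) (auto simp: inj_on_def \<phi>_def J_def intro!: prod.cong)
    finally have eq: "(\<Prod>C\<in>P. \<phi> C (\<lambda>j. if j \<in> C then digit dims x j else 0))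
       = \<phi> B (\<lambda>j. if j \<in> B then digit dims x j else 0) * (\<Prod>j\<in>J. if digit dims x j = 0 then 1 else 0)" .
    show ?thesis
    proof (cases "\<forall>j\<in>J. digit dims x j = 0")
      case True
      have set1: "{y. y < N \<and> (\<forall>j<length dims. digit dims y j = (if j \<in> B then (if j \<in> B then digit dims x j else 0) else 0))} = {x}"
      proof
        show "{x} \<subseteq> {y. y < N \<and> (\<forall>j<length dims. digit dims y j = (if j \<in> B then (if j \<in> B then digit dims x j else 0) else 0))}"
          using x True by (auto simp: J_def)
        show "{y. y < N \<and> (\<forall>j<length dims. digit dims y j = (if j \<in> B then (if j \<in> B then digit dims x j else 0) else 0))} \<subseteq> {x}"
        proof
          fix y assume y: "y \<in> {y. y < N \<and> (\<forall>j<length dims. digit dims y j = (if j \<in> B then (if j \<in> B then digit dims x j else 0) else 0))}"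
          have "y = x"
          proof (rule digit_unique)
            show "y < prod_list dims" "x < prod_list dims" using x y by (auto simp: N_def)
            fix j assume j: "j < length dims"
            show "digit dims y j = digit dims x j" using y j True by (auto simp: J_def)
          qed
          then show "y \<in> {x}" by simp
        qed
      qed
      have "\<phi> B (\<lambda>j. if j \<in> B then digit dims x j else 0) = w$x"
        unfolding \<phi>_def by (simp add: set1)
      moreover have "(\<Prod>j\<in>J. if digit dims x j = 0 then 1 else (0::complex)) = 1" using True by simp
      ultimately show ?thesis using eq by simp
    next
      case False
      then obtain j where j: "j \<in> J" "digit dims x j \<noteq> 0" by auto
      have "(\<Prod>j\<in>J. if digit dims x j = 0 then 1 else (0::complex)) = 0"
        using j finJ by (intro prod_zero) auto
      moreover have "w$x = 0" using supp[of x j] x j by (auto simp: N_def J_def)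
      ultimately show ?thesis using eq by simp
    qed
  qed
  show ?thesis unfolding k_producible_pure_def
    using w part prodeq by (auto simp: N_def)
qed


lemma pow_split: "a < d \<Longrightarrow> (2::nat)^a * (2 * 2^(d - Suc a)) = 2^d"
proof -
  assume a: "a < d"
  have "(2::nat)^a * (2 * 2^(d - Suc a)) = 2^(a + Suc (d - Suc a))" by (simp add: power_add)
  also have "a + Suc (d - Suc a) = d" using a by simp
  finally show ?thesis .
qed

lemma Ta_col0:
  assumes a: "a < d" and y: "y < 2^d"
  shows "kron (1\<^sub>m (2^a)) (kron sigma_x (1\<^sub>m (2^(d - Suc a)))) $$ (y, 0) = (if y = 2^(d - Suc a) then 1 else 0)"
proof -
  define e where "e = d - Suc a"
  have N: "(2::nat)^a * (2 * 2^e) = 2^d" using pow_split[OF a] by (simp add: e_def)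
  have sx: "sigma_x \<in> carrier_mat 2 2" by (simp add: sigma_x_def)
  have y': "y < 2^a * (2 * 2^e)" using y N by simp
  have dims: "dim_row (kron sigma_x (1\<^sub>m (2^e))) = 2 * 2^e" "dim_col (kron sigma_x (1\<^sub>m (2^e))) = 2 * 2^e"
    using sx by auto
  have ymod: "y mod (2 * 2^e) < 2 * 2^e" by simp
  have "kron (1\<^sub>m (2^a)) (kron sigma_x (1\<^sub>m (2^e))) $$ (y, 0) =
      1\<^sub>m (2^a) $$ (y div (2*2^e), 0) * kron sigma_x (1\<^sub>m (2^e)) $$ (y mod (2*2^e), 0)"
    using y' dims by (subst kron_index) auto
  also have "kron sigma_x (1\<^sub>m (2^e)) $$ (y mod (2*2^e), 0) =
      sigma_x $$ (y mod (2*2^e) div 2^e, 0) * 1\<^sub>m (2^e) $$ (y mod (2*2^e) mod 2^e, 0)"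
    using ymod sx by (subst kron_index) auto
  finally have eq: "kron (1\<^sub>m (2^a)) (kron sigma_x (1\<^sub>m (2^e))) $$ (y, 0) =
      1\<^sub>m (2^a) $$ (y div (2*2^e), 0) * (sigma_x $$ (y mod (2*2^e) div 2^e, 0) * 1\<^sub>m (2^e) $$ (y mod (2*2^e) mod 2^e, 0))" .
  have d1: "y div (2*2^e) < 2^a" using y' by (simp add: less_mult_imp_div_less)
  have d2: "y mod (2*2^e) div 2^e < 2" using ymod by (simp add: less_mult_imp_div_less)
  have sxi: "sigma_x $$ (p, 0) = (if p = 0 then 0 else 1)" if "p < 2" for p
    using that by (simp add: sigma_x_def)
  show ?thesis
  proof (cases "y = 2^e")
    case True
    then show ?thesis using eq d1 d2 by (simp add: sxi e_def)
  next
    case False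
    have "y div (2*2^e) \<noteq> 0 \<or> y mod (2*2^e) div 2^e = 0 \<or> y mod (2*2^e) mod 2^e \<noteq> 0"
    proof (rule ccontr)
      assume "\<not> ?thesis"
      then have h: "y div (2*2^e) = 0" "y mod (2*2^e) div 2^e \<noteq> 0" "y mod (2*2^e) mod 2^e = 0" by auto
      have "y < 2*2^e" using h(1) by (simp add: div_eq_0_iff)
      then have "y mod (2*2^e) = y" by simp
      then have "y div 2^e = 1" "y mod 2^e = 0" using h d2 by auto
      then have "y = 2^e" by (metis div_mult_mod_eq mult_1 add_0_right)
      then show False using False by simp
    qed
    then show ?thesis using eq d1 d2 False by (auto simp: sxi e_def)
  qed
qed


lemma sigma_x_dim[simp]: "dim_row sigma_x = 2" "dim_col sigma_x = 2" by (simp_all add: sigma_x_def)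

lemma T_dim:
  assumes "a < d"
  shows "dim_row (kron (1\<^sub>m (2^a)) (kron sigma_x (1\<^sub>m (2^(d - Suc a))))) = 2^d"
        "dim_col (kron (1\<^sub>m (2^a)) (kron sigma_x (1\<^sub>m (2^(d - Suc a))))) = 2^d"
  using pow_split[OF assms] by simp_all

lemma sum_upt_list: "(\<Sum>i\<leftarrow>[0..<d]. f i) = (\<Sum>i<d. f i)"
  by (simp add: sum_set_upt_conv_sum_list_nat[symmetric] atLeast0LessThan)

lemma UA_col:
  assumes a: "a < d" and r: "r < d * 2^d"
  shows "U_A d $$ (r, a * 2^d) = (if r = a * 2^d + 2^(d - Suc a) then 1 else 0)"
proof -
  define N where "N = (2::nat)^d"
  define T where "T = (\<lambda>i. kron (1\<^sub>m (2^i)) (kron sigma_x (1\<^sub>m (2^(d - Suc i)))))"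
  have Td: "dim_row (T i) = N" "dim_col (T i) = N" if "i < d" for i
    using T_dim[OF that] by (simp_all add: T_def N_def)
  have c: "kron (ketbra d i i) (T i) \<in> carrier_mat (d*N) (d*N)" if "i \<in> set [0..<d]" for i
    using that Td by auto
  have aN: "a * N < d * N" using a by (simp add: N_def)
  have Npos: "N > 0" by (simp add: N_def)
  have UA: "U_A d = msum (d*N) (\<lambda>i. kron (ketbra d i i) (T i)) [0..<d]"
    by (simp add: U_A_def T_def N_def)
  have "U_A d $$ (r, a*N) = (\<Sum>i\<leftarrow>[0..<d]. kron (ketbra d i i) (T i) $$ (r, a*N))"
    unfolding UA by (rule msum_index[OF c]) (use r aN in \<open>auto simp: N_def\<close>)
  also have "\<dots> = (\<Sum>i<d. kron (ketbra d i i) (T i) $$ (r, a*N))" by (rule sum_upt_list)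
  also have "\<dots> = (\<Sum>i<d. (if r div N = i \<and> a = i then 1 else 0) * T i $$ (r mod N, 0))"
  proof (intro sum.cong refl)
    fix i assume i: "i \<in> {..<d}"
    have rd: "r div N < d" using r by (simp add: N_def less_mult_imp_div_less)
    show "kron (ketbra d i i) (T i) $$ (r, a*N) = (if r div N = i \<and> a = i then 1 else 0) * T i $$ (r mod N, 0)"
      using i Td[of i] r aN rd a Npos by (subst kron_index) (auto simp: N_def)
  qed
  also have "\<dots> = (if r div N = a then 1 else 0) * T a $$ (r mod N, 0)"
    by (subst sum_one[OF a]) auto
  also have "\<dots> = (if r div N = a \<and> r mod N = 2^(d - Suc a) then 1 else 0)"
    using Ta_col0[OF a, of "r mod N"] by (simp add: T_def N_def)
  also have "(r div N = a \<and> r mod N = 2^(d - Suc a)) \<longleftrightarrow> r = a * N + 2^(d - Suc a)"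
  proof
    assume "r div N = a \<and> r mod N = 2^(d - Suc a)"
    then show "r = a * N + 2^(d - Suc a)" by (metis div_mult_mod_eq)
  next
    assume h: "r = a * N + 2^(d - Suc a)"
    have "(2::nat)^(d - Suc a) < N" unfolding N_def using a by (simp add: power_strict_increasing_iff)
    then show "r div N = a \<and> r mod N = 2^(d - Suc a)" using h Npos by simp
  qed
  finally show ?thesis by (simp add: N_def)
qed


lemma kron_pow_ketbra: "kron_pow (ketbra 2 0 0) n = ketbra (2^n) 0 0"
proof (induction n)
  case 0 then show ?case by (auto simp: ketbra_def)
next
  case (Suc n)
  show ?case
  proof (rule eq_matI)
    fix i j assume "i < dim_row (ketbra (2^Suc n) 0 0)" "j < dim_col (ketbra (2^Suc n) 0 0)"
    then have ij: "i < 2 * 2^n" "j < 2 * 2^n" by auto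
    have d: "i div 2^n < 2" "j div 2^n < 2" using ij by (simp_all add: less_mult_imp_div_less)
    have "(i div 2^n = 0 \<and> i mod 2^n = 0) \<longleftrightarrow> i = 0" by (metis div_mult_mod_eq mult_0 add_0 div_0 mod_0)
    moreover have "(j div 2^n = 0 \<and> j mod 2^n = 0) \<longleftrightarrow> j = 0" by (metis div_mult_mod_eq mult_0 add_0 div_0 mod_0)
    ultimately show "kron_pow (ketbra 2 0 0) (Suc n) $$ (i,j) = ketbra (2^Suc n) 0 0 $$ (i,j)"
      using ij d by (auto simp: Suc kron_index)
  qed (auto simp: Suc)
qed

lemma zero_proj_eq: "zero_proj d = ketbra (2^d) 0 0"
  by (simp add: zero_proj_def kron_pow_ketbra)

lemma UA_carrier: "U_A d \<in> carrier_mat (d * 2^d) (d * 2^d)"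
proof -
  have "kron (ketbra d i i) (kron (1\<^sub>m (2^i)) (kron sigma_x (1\<^sub>m (2^(d - Suc i))))) \<in> carrier_mat (d * 2^d) (d * 2^d)"
    if "i \<in> set [0..<d]" for i
    using T_dim[of i d] that by auto
  then show ?thesis unfolding U_A_def by (rule msum_carrier)
qed

lemma UA_dim[simp]: "dim_row (U_A d) = d * 2^d" "dim_col (U_A d) = d * 2^d"
  using UA_carrier[of d] by auto

lemma sum_mult_only:
  assumes "(N::nat) > 0" "\<And>c. c < d*N \<Longrightarrow> c mod N \<noteq> 0 \<Longrightarrow> g c = 0"
  shows "(\<Sum>c<d*N. g c) = (\<Sum>P<d. g (P*N))"
proof -
  have "(\<Sum>c<d*N. g c) = (\<Sum>P<d. \<Sum>x<N. g (P*N+x))" by (rule sum_prod_split)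
  also have "\<dots> = (\<Sum>P<d. g (P*N + 0))"
  proof (intro sum.cong refl)
    fix P assume P: "P \<in> {..<d}"
    show "(\<Sum>x<N. g (P*N+x)) = g (P*N+0)"
    proof (rule sum_one[OF assms(1)])
      fix x assume "x < N" "x \<noteq> 0"
      moreover have "P*N + x < d*N"
      proof -
        have "P*N + x < (P+1)*N" using \<open>x < N\<close> by simp
        also have "(P+1)*N \<le> d*N" using P by (intro mult_le_mono1) simp
        finally show ?thesis .
      qed
      ultimately show "g (P*N+x) = 0" using assms(2)[of "P*N+x"] by simp
    qed
  qed
  finally show ?thesis by simp
qed

definition KA :: "nat \<Rightarrow> nat \<Rightarrow> nat \<Rightarrow> nat \<Rightarrow> complex" where
  "KA d l r a = (if r = a * 2^d + 2^(d - Suc a) then 1 else 0)"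

lemma rho'_kraus:
  assumes X: "X \<in> carrier_mat d d"
  shows "rho' d X = kraus d (d * 2^d) (KA d) {0} X"
proof (rule eq_matI)
  define N where "N = (2::nat)^d"
  have Npos: "N > 0" by (simp add: N_def)
  fix i j assume "i < dim_row (kraus d (d * 2^d) (KA d) {0} X)" "j < dim_col (kraus d (d * 2^d) (KA d) {0} X)"
  then have ij: "i < d*N" "j < d*N" by (auto simp: N_def)
  have U: "U_A d \<in> carrier_mat (d*N) (d*N)" using UA_carrier by (simp add: N_def)
  have Kr: "kron X (zero_proj d) \<in> carrier_mat (d*N) (d*N)" using X by (auto simp: zero_proj_eq N_def)
  have Kri: "kron X (zero_proj d) $$ (c,e) = X$$(c div N, e div N) * (if c mod N = 0 \<and> e mod N = 0 then 1 else 0)"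
    if "c < d*N" "e < d*N" for c e
    using that X Npos by (subst kron_index) (auto simp: zero_proj_eq N_def)
  have "rho' d X $$ (i,j) = (\<Sum>c<d*N. \<Sum>e<d*N. U_A d $$ (i,c) * kron X (zero_proj d) $$ (c,e) * cnj (U_A d $$ (j,e)))"
    unfolding rho'_def by (rule sandwich_index[OF U Kr ij])
  also have "\<dots> = (\<Sum>c<d*N. \<Sum>Q<d. U_A d $$ (i,c) * kron X (zero_proj d) $$ (c,Q*N) * cnj (U_A d $$ (j,Q*N)))"
    by (intro sum.cong refl sum_mult_only[OF Npos]) (auto simp: Kri)
  also have "\<dots> = (\<Sum>P<d. \<Sum>Q<d. U_A d $$ (i,P*N) * kron X (zero_proj d) $$ (P*N,Q*N) * cnj (U_A d $$ (j,Q*N)))"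
  proof (rule sum_mult_only[OF Npos])
    fix c assume c: "c < d*N" "c mod N \<noteq> 0"
    show "(\<Sum>Q<d. U_A d $$ (i,c) * kron X (zero_proj d) $$ (c,Q*N) * cnj (U_A d $$ (j,Q*N))) = 0"
    proof (intro sum.neutral ballI)
      fix Q assume "Q \<in> {..<d}"
      then have "Q*N < d*N" using Npos by simp
      then show "U_A d $$ (i,c) * kron X (zero_proj d) $$ (c,Q*N) * cnj (U_A d $$ (j,Q*N)) = 0"
        using c by (simp add: Kri)
    qed
  qed
  also have "\<dots> = (\<Sum>P<d. \<Sum>Q<d. KA d 0 i P * X$$(P,Q) * cnj (KA d 0 j Q))"
  proof (intro sum.cong refl)
    fix P Q assume PQ: "P \<in> {..<d}" "Q \<in> {..<d}"
    then have "P*N < d*N" "Q*N < d*N" using Npos by auto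
    then show "U_A d $$ (i,P*N) * kron X (zero_proj d) $$ (P*N,Q*N) * cnj (U_A d $$ (j,Q*N)) = KA d 0 i P * X$$(P,Q) * cnj (KA d 0 j Q)"
      using PQ ij Npos by (simp add: Kri UA_col[unfolded N_def[symmetric]] KA_def N_def)
  qed
  also have "\<dots> = kraus d (d * 2^d) (KA d) {0} X $$ (i,j)"
    using ij by (simp add: kraus_index N_def)
  finally show "rho' d X $$ (i,j) = kraus d (d * 2^d) (KA d) {0} X $$ (i,j)" .
qed (auto simp: rho'_def)


lemma kraus_cong_K:
  assumes "\<And>l i a. l \<in> L \<Longrightarrow> i < m \<Longrightarrow> a < n \<Longrightarrow> K l i a = K' l i a"
  shows "kraus n m K L X = kraus n m K' L X"
  unfolding kraus_def using assms by (intro eq_matI) auto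

lemma kraus_comp:
  assumes X: "X \<in> carrier_mat n1 n1"
  shows "kraus n2 n3 K2 L2 (kraus n1 n2 K1 {0} X) = kraus n1 n3 (\<lambda>l i a. \<Sum>c<n2. K2 l i c * K1 0 c a) L2 X"
proof (rule eq_matI)
  fix i j assume "i < dim_row (kraus n1 n3 (\<lambda>l i a. \<Sum>c<n2. K2 l i c * K1 0 c a) L2 X)"
     "j < dim_col (kraus n1 n3 (\<lambda>l i a. \<Sum>c<n2. K2 l i c * K1 0 c a) L2 X)"
  then have ij: "i < n3" "j < n3" by auto
  have "kraus n2 n3 K2 L2 (kraus n1 n2 K1 {0} X) $$ (i,j) =
      (\<Sum>l\<in>L2. \<Sum>c<n2. \<Sum>e<n2. K2 l i c * (\<Sum>a<n1. \<Sum>b<n1. K1 0 c a * X$$(a,b) * cnj (K1 0 e b)) * cnj (K2 l j e))"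
    using ij by (simp add: kraus_index)
  also have "\<dots> = (\<Sum>l\<in>L2. \<Sum>a<n1. \<Sum>b<n1. (\<Sum>c<n2. K2 l i c * K1 0 c a) * X$$(a,b) * cnj (\<Sum>c<n2. K2 l j c * K1 0 c b))"
  proof (rule sum.cong[OF refl])
    fix l
    have "(\<Sum>c<n2. \<Sum>e<n2. K2 l i c * (\<Sum>a<n1. \<Sum>b<n1. K1 0 c a * X$$(a,b) * cnj (K1 0 e b)) * cnj (K2 l j e))
       = (\<Sum>c<n2. \<Sum>e<n2. \<Sum>a<n1. \<Sum>b<n1. (K2 l i c * K1 0 c a) * X$$(a,b) * (cnj (K2 l j e) * cnj (K1 0 e b)))"
      by (simp add: sum_distrib_left sum_distrib_right mult_ac)
    also have "\<dots> = (\<Sum>a<n1. \<Sum>b<n1. \<Sum>c<n2. \<Sum>e<n2. (K2 l i c * K1 0 c a) * X$$(a,b) * (cnj (K2 l j e) * cnj (K1 0 e b)))"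
      by (rule swap4)
    also have "\<dots> = (\<Sum>a<n1. \<Sum>b<n1. (\<Sum>c<n2. K2 l i c * K1 0 c a) * X$$(a,b) * cnj (\<Sum>c<n2. K2 l j c * K1 0 c b))"
      by (simp add: sum_distrib_left sum_distrib_right mult_ac)
    finally show "(\<Sum>c<n2. \<Sum>e<n2. K2 l i c * (\<Sum>a<n1. \<Sum>b<n1. K1 0 c a * X$$(a,b) * cnj (K1 0 e b)) * cnj (K2 l j e))
       = (\<Sum>a<n1. \<Sum>b<n1. (\<Sum>c<n2. K2 l i c * K1 0 c a) * X$$(a,b) * cnj (\<Sum>c<n2. K2 l j c * K1 0 c b))" .
  qed
  also have "\<dots> = kraus n1 n3 (\<lambda>l i a. \<Sum>c<n2. K2 l i c * K1 0 c a) L2 X $$ (i,j)"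
    using ij by (simp add: kraus_index)
  finally show "kraus n2 n3 K2 L2 (kraus n1 n2 K1 {0} X) $$ (i,j) = kraus n1 n3 (\<lambda>l i a. \<Sum>c<n2. K2 l i c * K1 0 c a) L2 X $$ (i,j)" .
qed auto

lemma foldr_kron_diag:
  assumes "\<And>j. j \<in> set js \<Longrightarrow> M j \<in> carrier_mat 2 2 \<and> M j $$ (0,1) = 0 \<and> M j $$ (1,0) = 0 \<and>
       cmod (M j $$ (0,0)) = 1 \<and> cmod (M j $$ (1,1)) = 1"
  shows "foldr (\<lambda>j acc. kron (M j) acc) js (1\<^sub>m 1) \<in> carrier_mat (2^length js) (2^length js) \<and>
    (\<forall>x<2^length js. \<forall>y<2^length js. x \<noteq> y \<longrightarrow> foldr (\<lambda>j acc. kron (M j) acc) js (1\<^sub>m 1) $$ (x,y) = 0) \<and>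
    (\<forall>x<2^length js. cmod (foldr (\<lambda>j acc. kron (M j) acc) js (1\<^sub>m 1) $$ (x,x)) = 1)"
  using assms
proof (induction js)
  case Nil then show ?case by auto
next
  case (Cons j js)
  define F where "F = foldr (\<lambda>j acc. kron (M j) acc) js (1\<^sub>m 1)"
  define P where "P = (2::nat)^length js"
  have IH: "F \<in> carrier_mat P P" "\<And>x y. x < P \<Longrightarrow> y < P \<Longrightarrow> x \<noteq> y \<Longrightarrow> F $$ (x,y) = 0"
     "\<And>x. x < P \<Longrightarrow> cmod (F $$ (x,x)) = 1"
    using Cons by (auto simp: F_def P_def)
  have Mj: "M j \<in> carrier_mat 2 2" "M j $$ (0,1) = 0" "M j $$ (1,0) = 0" "cmod (M j $$ (0,0)) = 1" "cmod (M j $$ (1,1)) = 1"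
    using Cons.prems by auto
  have Moff: "p < 2 \<Longrightarrow> q < 2 \<Longrightarrow> p \<noteq> q \<Longrightarrow> M j $$ (p,q) = 0" for p q
    using Mj by (cases p; cases q) auto
  have Mdiag: "p < 2 \<Longrightarrow> cmod (M j $$ (p,p)) = 1" for p
    using Mj by (cases p) auto
  have eq: "foldr (\<lambda>j acc. kron (M j) acc) (j#js) (1\<^sub>m 1) = kron (M j) F" by (simp add: F_def)
  have dims: "dim_row (kron (M j) F) = 2 * P" "dim_col (kron (M j) F) = 2 * P" using Mj IH by auto
  have idx: "kron (M j) F $$ (x,y) = M j $$ (x div P, y div P) * F $$ (x mod P, y mod P)"
    if "x < 2*P" "y < 2*P" for x y
    using that Mj IH by (subst kron_index) auto
  have P: "P > 0" by (simp add: P_def)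
  have off: "kron (M j) F $$ (x,y) = 0" if "x < 2*P" "y < 2*P" "x \<noteq> y" for x y
  proof (cases "x div P = y div P")
    case True
    then have "x mod P \<noteq> y mod P" using that by (metis div_mult_mod_eq)
    then show ?thesis using idx[OF that(1,2)] IH(2) P by simp
  next
    case False
    have "x div P < 2" "y div P < 2" using that by (simp_all add: less_mult_imp_div_less mult.commute)
    then show ?thesis using idx[OF that(1,2)] Moff False by simp
  qed
  have diag: "cmod (kron (M j) F $$ (x,x)) = 1" if "x < 2*P" for x
  proof -
    have "x div P < 2" using that by (simp add: less_mult_imp_div_less mult.commute)
    then show ?thesis using idx[OF that that] Mdiag IH(3) P by (simp add: norm_mult)
  qed
  show ?case unfolding eq using dims off diag by (auto simp: P_def)
qed

definition MD :: "nat \<Rightarrow> nat \<Rightarrow> nat \<Rightarrow> complex mat" where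
  "MD d m j = mat 2 2 (\<lambda>(r,s). if r = 0 \<and> s = 0 then 1
                          else if r = 1 \<and> s = 1 then cis (- 2 * pi * real j * real m / real d) else 0)"

lemma UD_props:
  "U_D d m \<in> carrier_mat (2^d) (2^d) \<and>
    (\<forall>x<2^d. \<forall>y<2^d. x \<noteq> y \<longrightarrow> U_D d m $$ (x,y) = 0) \<and>
    (\<forall>x<2^d. cmod (U_D d m $$ (x,x)) = 1)"
proof -
  have eq: "U_D d m = foldr (\<lambda>j acc. kron (MD d m j) acc) [1..<Suc d] (1\<^sub>m 1)"
    by (simp add: U_D_def MD_def)
  have "MD d m j \<in> carrier_mat 2 2 \<and> MD d m j $$ (0,1) = 0 \<and> MD d m j $$ (1,0) = 0 \<and>
       cmod (MD d m j $$ (0,0)) = 1 \<and> cmod (MD d m j $$ (1,1)) = 1" for j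
    by (simp add: MD_def)
  then have h: "foldr (\<lambda>j acc. kron (MD d m j) acc) [1..<Suc d] (1\<^sub>m 1) \<in> carrier_mat (2^length [1..<Suc d]) (2^length [1..<Suc d]) \<and>
    (\<forall>x<2^length [1..<Suc d]. \<forall>y<2^length [1..<Suc d]. x \<noteq> y \<longrightarrow> foldr (\<lambda>j acc. kron (MD d m j) acc) [1..<Suc d] (1\<^sub>m 1) $$ (x,y) = 0) \<and>
    (\<forall>x<2^length [1..<Suc d]. cmod (foldr (\<lambda>j acc. kron (MD d m j) acc) [1..<Suc d] (1\<^sub>m 1) $$ (x,x)) = 1)"
    by (intro foldr_kron_diag) blast
  have l: "length [1..<Suc d] = d" by simp
  show ?thesis unfolding eq using h unfolding l .
qed

lemma fourier_dim[simp]: "dim_row (fourier d) = d" "dim_col (fourier d) = d" by (simp_all add: fourier_def)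

lemma fourier_abs:
  assumes "b < d" "a < d"
  shows "cnj (fourier d $$ (b,a)) * fourier d $$ (b,a) = complex_of_real (1 / real d)"
proof -
  have "cnj (fourier d $$ (b,a)) * fourier d $$ (b,a) = complex_of_real ((cmod (fourier d $$ (b,a)))^2)"
    by (rule cnj_mult_self)
  also have "cmod (fourier d $$ (b,a)) = 1 / sqrt (real d)"
    using assms by (simp add: fourier_def norm_divide)
  also have "(1 / sqrt (real d))^2 = 1 / real d" by (simp add: power_divide)
  finally show ?thesis .
qed


definition Gm :: "nat \<Rightarrow> complex mat" where
  "Gm d = kron (fourier d) (1\<^sub>m (2^d))"

lemma Gm_dim[simp]: "dim_row (Gm d) = d * 2^d" "dim_col (Gm d) = d * 2^d"
  by (simp_all add: Gm_def)

lemma AG_index: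
  assumes t0: "t0 < d" and R: "R < d * 2^d" and c: "c < d * 2^d"
  shows "(kron (ketbra d t0 t0) (1\<^sub>m (2^d)) * Gm d) $$ (R,c) =
     (if R div 2^d = t0 then Gm d $$ (t0 * 2^d + R mod 2^d, c) else 0)"
proof -
  define N where "N = (2::nat)^d"
  have Npos: "N > 0" by (simp add: N_def)
  have Aidx: "kron (ketbra d t0 t0) (1\<^sub>m N) $$ (R,e) =
     (if R div N = t0 \<and> e div N = t0 \<and> R mod N = e mod N then 1 else 0)" if e: "e < d*N" for e
  proof -
    have "R div N < d" "e div N < d" using R e by (simp_all add: N_def less_mult_imp_div_less)
    then show ?thesis using R e Npos by (subst kron_index) (auto simp: N_def)
  qed
  have "(kron (ketbra d t0 t0) (1\<^sub>m N) * Gm d) $$ (R,c) = (\<Sum>e<d*N. kron (ketbra d t0 t0) (1\<^sub>m N) $$ (R,e) * Gm d $$ (e,c))"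
    using R c by (subst mult_index) (auto simp: N_def)
  also have "\<dots> = (if R div N = t0 then Gm d $$ (t0 * N + R mod N, c) else 0)"
  proof (cases "R div N = t0")
    case True
    have e0: "t0 * N + R mod N < d * N"
    proof -
      have "t0 * N + R mod N < (t0 + 1) * N" using Npos by simp
      also have "\<dots> \<le> d * N" using t0 by (intro mult_le_mono1) simp
      finally show ?thesis .
    qed
    have "(\<Sum>e<d*N. kron (ketbra d t0 t0) (1\<^sub>m N) $$ (R,e) * Gm d $$ (e,c)) =
       kron (ketbra d t0 t0) (1\<^sub>m N) $$ (R,t0 * N + R mod N) * Gm d $$ (t0 * N + R mod N,c)"
    proof (rule sum_one[OF e0])
      fix e assume e: "e < d*N" "e \<noteq> t0 * N + R mod N"
      have "\<not> (e div N = t0 \<and> R mod N = e mod N)"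
        using e(2) by (metis div_mult_mod_eq)
      then show "kron (ketbra d t0 t0) (1\<^sub>m N) $$ (R,e) * Gm d $$ (e,c) = 0"
        using Aidx[OF e(1)] by auto
    qed
    also have "kron (ketbra d t0 t0) (1\<^sub>m N) $$ (R,t0 * N + R mod N) = 1"
      using Aidx[OF e0] True Npos by simp
    finally show ?thesis using True by simp
  next
    case False
    then show ?thesis using Aidx by (auto intro!: sum.neutral)
  qed
  finally show ?thesis by (simp add: N_def)
qed

lemma Gadj_index:
  assumes "e < d * 2^d" "S < d * 2^d"
  shows "kron (adj (fourier d)) (1\<^sub>m (2^d)) $$ (e,S) = cnj (Gm d $$ (S,e))"
proof -
  have "e div 2^d < d" "S div 2^d < d" using assms by (simp_all add: less_mult_imp_div_less)
  then show ?thesis using assms by (simp add: Gm_def kron_index)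
qed

definition KD :: "nat \<Rightarrow> nat \<Rightarrow> nat \<Rightarrow> nat \<Rightarrow> complex" where
  "KD d m x c = U_D d m $$ (x,x) * Gm d $$ ((m - 1) * 2^d + x, c)"

lemma PT_index:
  assumes Y: "Y \<in> carrier_mat (d * 2^d) (d * 2^d)" and t0: "t0 < d" and ij: "i < 2^d" "j < 2^d"
  shows "ptrace_first d (2^d) (kron (ketbra d t0 t0) (1\<^sub>m (2^d)) * Gm d * Y * kron (adj (fourier d)) (1\<^sub>m (2^d))) $$ (i,j)
    = (\<Sum>e<d * 2^d. (\<Sum>c<d * 2^d. Gm d $$ (t0 * 2^d + i, c) * Y$$(c,e)) * cnj (Gm d $$ (t0 * 2^d + j, e)))"
proof -
  define N where "N = (2::nat)^d"
  define AG where "AG = kron (ketbra d t0 t0) (1\<^sub>m N) * Gm d"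
  have AGc: "AG \<in> carrier_mat (d*N) (d*N)" by (simp add: AG_def N_def carrier_matI)
  have Z: "(AG * Y * kron (adj (fourier d)) (1\<^sub>m N)) $$ (R,S) =
     (\<Sum>e<d*N. (\<Sum>c<d*N. AG $$ (R,c) * Y$$(c,e)) * cnj (Gm d $$ (S,e)))" if "R < d*N" "S < d*N" for R S
  proof -
    have "(AG * Y * kron (adj (fourier d)) (1\<^sub>m N)) $$ (R,S) = (\<Sum>e<d*N. (AG * Y) $$ (R,e) * kron (adj (fourier d)) (1\<^sub>m N) $$ (e,S))"
      using that AGc Y by (subst mult_index) (auto simp: N_def)
    also have "\<dots> = (\<Sum>e<d*N. (\<Sum>c<d*N. AG $$ (R,c) * Y$$(c,e)) * cnj (Gm d $$ (S,e)))"
    proof (intro sum.cong refl)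
      fix e assume e: "e \<in> {..<d*N}"
      have m1: "(AG*Y)$$(R,e) = (\<Sum>c<d*N. AG$$(R,c) * Y$$(c,e))"
        using that e AGc Y by (subst mult_index) (auto simp: N_def)
      show "(AG * Y) $$ (R,e) * kron (adj (fourier d)) (1\<^sub>m N) $$ (e,S) = (\<Sum>c<d*N. AG $$ (R,c) * Y$$(c,e)) * cnj (Gm d $$ (S,e))"
        unfolding m1 using Gadj_index[of e d S] that e by (simp add: N_def)
    qed
    finally show ?thesis .
  qed
  have tN: "t*N + i < d*N" "t*N + j < d*N" if "t < d" for t
  proof -
    have "t*N + i < (t+1)*N" "t*N + j < (t+1)*N" using ij by (simp_all add: N_def)
    moreover have "(t+1)*N \<le> d*N" using that by (intro mult_le_mono1) simp
    ultimately show "t*N + i < d*N" "t*N + j < d*N" by linarith+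
  qed
  have AGi: "AG $$ (t*N + i, c) = (if t = t0 then Gm d $$ (t0 * N + i, c) else 0)" if "t < d" "c < d*N" for t c
    using AG_index[OF t0 tN(1)[OF that(1), unfolded N_def] that(2)[unfolded N_def]] ij
    by (simp add: AG_def N_def)
  have "ptrace_first d N (AG * Y * kron (adj (fourier d)) (1\<^sub>m N)) $$ (i,j) =
      (\<Sum>t<d. (AG * Y * kron (adj (fourier d)) (1\<^sub>m N)) $$ (t*N+i, t*N+j))"
    using ij by (simp add: ptrace_first_def N_def)
  also have "\<dots> = (\<Sum>t<d. \<Sum>e<d*N. (\<Sum>c<d*N. AG $$ (t*N+i,c) * Y$$(c,e)) * cnj (Gm d $$ (t*N+j,e)))"
    using tN by (intro sum.cong refl) (simp add: Z)
  also have "\<dots> = (\<Sum>e<d*N. (\<Sum>c<d*N. AG $$ (t0*N+i,c) * Y$$(c,e)) * cnj (Gm d $$ (t0*N+j,e)))"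
    by (rule sum_one[OF t0]) (auto simp: AGi intro!: sum.neutral)
  also have "\<dots> = (\<Sum>e<d*N. (\<Sum>c<d*N. Gm d $$ (t0*N+i,c) * Y$$(c,e)) * cnj (Gm d $$ (t0*N+j,e)))"
    using t0 by (intro sum.cong refl) (simp add: AGi)
  finally show ?thesis by (simp add: N_def AG_def)
qed

lemma Delta_kraus:
  assumes Y: "Y \<in> carrier_mat (d * 2^d) (d * 2^d)"
  shows "Delta d Y = kraus (d * 2^d) (2^d) (KD d) {1..<Suc d} Y"
proof (rule eq_matI)
  define N where "N = (2::nat)^d"
  fix i j assume "i < dim_row (kraus (d * 2^d) (2^d) (KD d) {1..<Suc d} Y)" "j < dim_col (kraus (d * 2^d) (2^d) (KD d) {1..<Suc d} Y)"
  then have ij: "i < N" "j < N" by (auto simp: N_def)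
  define PT where "PT = (\<lambda>m. ptrace_first d N (kron (ketbra d (m - 1) (m - 1)) (1\<^sub>m N) * kron (fourier d) (1\<^sub>m N) * Y * kron (adj (fourier d)) (1\<^sub>m N)))"
  have PTc: "PT m \<in> carrier_mat N N" for m by (simp add: PT_def ptrace_first_def)
  have UD: "U_D d m \<in> carrier_mat N N" "\<And>x y. x < N \<Longrightarrow> y < N \<Longrightarrow> x \<noteq> y \<Longrightarrow> U_D d m $$ (x,y) = 0" for m
    using UD_props[of d m] by (auto simp: N_def)
  have c: "U_D d m * PT m * adj (U_D d m) \<in> carrier_mat N N" if "m \<in> set [1..<Suc d]" for m
    using UD(1)[of m] PTc[of m] by auto
  have DeltaEq: "Delta d Y = msum N (\<lambda>m. U_D d m * PT m * adj (U_D d m)) [1..<Suc d]"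
    by (simp add: Delta_def PT_def N_def)
  have "Delta d Y $$ (i,j) = (\<Sum>m\<leftarrow>[1..<Suc d]. (U_D d m * PT m * adj (U_D d m)) $$ (i,j))"
    unfolding DeltaEq by (rule msum_index[OF c ij])
  also have "\<dots> = (\<Sum>m\<in>{1..<Suc d}. (U_D d m * PT m * adj (U_D d m)) $$ (i,j))"
    by (simp add: sum_set_upt_conv_sum_list_nat[symmetric])
  also have "\<dots> = (\<Sum>m\<in>{1..<Suc d}. \<Sum>c<d*N. \<Sum>e<d*N. KD d m i c * Y$$(c,e) * cnj (KD d m j e))"
  proof (intro sum.cong refl)
    fix m assume m: "m \<in> {1..<Suc d}"
    then have t0: "m - 1 < d" by auto
    have zi: "U_D d m $$ (i,a) = 0" if "a < N" "a \<noteq> i" for a using UD(2)[of i a m] that ij by auto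
    have zj: "U_D d m $$ (j,a) = 0" if "a < N" "a \<noteq> j" for a using UD(2)[of j a m] that ij by auto
    have "(U_D d m * PT m * adj (U_D d m)) $$ (i,j) = (\<Sum>a<N. \<Sum>b<N. U_D d m $$ (i,a) * PT m $$ (a,b) * cnj (U_D d m $$ (j,b)))"
      by (rule sandwich_index[OF UD(1) PTc ij])
    also have "\<dots> = (\<Sum>b<N. U_D d m $$ (i,i) * PT m $$ (i,b) * cnj (U_D d m $$ (j,b)))"
      by (rule sum_one[OF ij(1)]) (auto simp: zi intro!: sum.neutral)
    also have "\<dots> = U_D d m $$ (i,i) * PT m $$ (i,j) * cnj (U_D d m $$ (j,j))"
      by (rule sum_one[OF ij(2)]) (auto simp: zj)
    also have "PT m $$ (i,j) = (\<Sum>e<d*N. (\<Sum>c<d*N. Gm d $$ ((m-1) * N + i, c) * Y$$(c,e)) * cnj (Gm d $$ ((m-1) * N + j, e)))"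
      using PT_index[OF Y t0 ij[unfolded N_def]] by (simp add: PT_def N_def Gm_def)
    also have "U_D d m $$ (i,i) * (\<Sum>e<d*N. (\<Sum>c<d*N. Gm d $$ ((m-1) * N + i, c) * Y$$(c,e)) * cnj (Gm d $$ ((m-1) * N + j, e))) * cnj (U_D d m $$ (j,j))
       = (\<Sum>e<d*N. \<Sum>c<d*N. KD d m i c * Y$$(c,e) * cnj (KD d m j e))"
      by (simp add: KD_def N_def sum_distrib_left sum_distrib_right mult_ac)
    also have "\<dots> = (\<Sum>c<d*N. \<Sum>e<d*N. KD d m i c * Y$$(c,e) * cnj (KD d m j e))"
      by (rule sum.swap)
    finally show "(U_D d m * PT m * adj (U_D d m)) $$ (i,j) = (\<Sum>c<d*N. \<Sum>e<d*N. KD d m i c * Y$$(c,e) * cnj (KD d m j e))" .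
  qed
  also have "\<dots> = kraus (d * 2^d) (2^d) (KD d) {1..<Suc d} Y $$ (i,j)"
    using ij by (simp add: kraus_index N_def)
  finally show "Delta d Y $$ (i,j) = kraus (d * 2^d) (2^d) (KD d) {1..<Suc d} Y $$ (i,j)" .
next
  have "Delta d Y \<in> carrier_mat (2^d) (2^d)"
    unfolding Delta_def
  proof (rule msum_carrier)
    fix m
    have U: "U_D d m \<in> carrier_mat (2^d) (2^d)" using UD_props by blast
    show "U_D d m * ptrace_first d (2^d) (kron (ketbra d (m - 1) (m - 1)) (1\<^sub>m (2^d)) * kron (fourier d) (1\<^sub>m (2^d)) * Y * kron (adj (fourier d)) (1\<^sub>m (2^d))) * adj (U_D d m) \<in> carrier_mat (2^d) (2^d)"
      using U by (intro carrier_matI) (simp_all add: ptrace_first_def)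
  qed
  then show "dim_row (Delta d Y) = dim_row (kraus (d * 2^d) (2^d) (KD d) {1..<Suc d} Y)"
    "dim_col (Delta d Y) = dim_col (kraus (d * 2^d) (2^d) (KD d) {1..<Suc d} Y)" by auto
qed


definition KC :: "nat \<Rightarrow> nat \<Rightarrow> nat \<Rightarrow> nat \<Rightarrow> complex" where
  "KC d m x a = U_D d m $$ (x,x) * fourier d $$ (m - 1, a) * (if x = 2^(d - Suc a) then 1 else 0)"

lemma pa_less: "a < d \<Longrightarrow> (2::nat)^(d - Suc a) < 2^d"
  by (simp add: power_strict_increasing_iff)

lemma pos_less: assumes "a < d" "x < (2::nat)^d" shows "a * 2^d + x < d * 2^d"
proof -
  have "a * 2^d + x < (a+1) * 2^d" using assms by simp
  also have "\<dots> \<le> d * 2^d" using assms by (intro mult_le_mono1) simp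
  finally show ?thesis .
qed

lemma Delta_rho'_kraus:
  assumes X: "X \<in> carrier_mat d d"
  shows "Delta d (rho' d X) = kraus d (2^d) (KC d) {1..<Suc d} X"
proof -
  define N where "N = (2::nat)^d"
  have r: "rho' d X = kraus d (d * N) (KA d) {0} X" using rho'_kraus[OF X] by (simp add: N_def)
  have rc: "rho' d X \<in> carrier_mat (d * 2^d) (d * 2^d)" using r by (simp add: N_def)
  have "Delta d (rho' d X) = kraus (d * N) N (KD d) {1..<Suc d} (kraus d (d * N) (KA d) {0} X)"
    using Delta_kraus[OF rc] r by (simp add: N_def)
  also have "\<dots> = kraus d N (\<lambda>l i a. \<Sum>c<d * N. KD d l i c * KA d 0 c a) {1..<Suc d} X"
    by (rule kraus_comp[OF X])
  also have "\<dots> = kraus d N (KC d) {1..<Suc d} X"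
  proof (rule kraus_cong_K)
    fix m x a assume m: "m \<in> {1..<Suc d}" and x: "x < N" and a: "a < d"
    have p: "2^(d - Suc a) < N" using pa_less[OF a] by (simp add: N_def)
    have pos: "a * N + 2^(d - Suc a) < d * N" using pos_less[OF a pa_less[OF a]] by (simp add: N_def)
    have "(\<Sum>c<d * N. KD d m x c * KA d 0 c a) = KD d m x (a * N + 2^(d - Suc a)) * KA d 0 (a * N + 2^(d - Suc a)) a"
      by (rule sum_one[OF pos]) (simp add: KA_def N_def)
    also have "\<dots> = KD d m x (a * N + 2^(d - Suc a))" by (simp add: KA_def N_def)
    also have "\<dots> = KC d m x a"
    proof -
      have m1: "m - 1 < d" using m by auto
      have i1: "(m - 1) * N + x < d * N" using pos_less[OF m1, of x] x by (simp add: N_def)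
      have "Gm d $$ ((m - 1) * N + x, a * N + 2^(d - Suc a)) =
         fourier d $$ (((m - 1) * N + x) div N, (a * N + 2^(d - Suc a)) div N) * 1\<^sub>m N $$ (((m - 1) * N + x) mod N, (a * N + 2^(d - Suc a)) mod N)"
        unfolding Gm_def using i1 pos by (subst kron_index) (auto simp: N_def)
      also have "\<dots> = fourier d $$ (m - 1, a) * (if x = 2^(d - Suc a) then 1 else 0)"
        using x p by (simp add: N_def)
      finally show ?thesis by (simp add: KD_def KC_def N_def)
    qed
    finally show "(\<Sum>c<d * N. KD d m x c * KA d 0 c a) = KC d m x a" .
  qed
  finally show ?thesis by (simp add: N_def)
qed

lemma KA_tp:
  assumes "a < d" "b < d"
  shows "(\<Sum>l\<in>{0::nat}. \<Sum>r<d * 2^d. cnj (KA d l r b) * KA d l r a) = (if a = b then 1 else 0)"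
proof -
  define N where "N = (2::nat)^d"
  have pos: "a * N + 2^(d - Suc a) < d * N" using pos_less[OF assms(1) pa_less[OF assms(1)]] by (simp add: N_def)
  have dv: "(a * N + 2^(d - Suc a)) div N = a" "(b * N + 2^(d - Suc b)) div N = b"
    using pa_less[OF assms(1)] pa_less[OF assms(2)] by (simp_all add: N_def)
  have "(\<Sum>r<d * N. cnj (KA d 0 r b) * KA d 0 r a) = cnj (KA d 0 (a * N + 2^(d - Suc a)) b) * KA d 0 (a * N + 2^(d - Suc a)) a"
    by (rule sum_one[OF pos]) (simp add: KA_def N_def)
  also have "\<dots> = (if a = b then 1 else 0)"
  proof (cases "a = b")
    case True then show ?thesis by (simp add: KA_def N_def)
  next
    case False
    have "a * N + 2^(d - Suc a) \<noteq> b * N + 2^(d - Suc b)" using dv False by metis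
    then show ?thesis using False by (simp add: KA_def N_def)
  qed
  finally show ?thesis by (simp add: N_def)
qed

lemma KC_tp:
  assumes a: "a < d" and b: "b < d"
  shows "(\<Sum>m\<in>{1..<Suc d}. \<Sum>x<2^d. cnj (KC d m x b) * KC d m x a) = (if a = b then 1 else 0)"
proof (cases "a = b")
  case False
  have "2^(d - Suc a) \<noteq> (2::nat)^(d - Suc b)" using False a b by (simp add: power_inject_exp)
  then have z: "cnj (KC d m x b) * KC d m x a = 0" for m x by (auto simp: KC_def)
  have "(\<Sum>m\<in>{1..<Suc d}. \<Sum>x<2^d. cnj (KC d m x b) * KC d m x a) = 0"
    by (intro sum.neutral ballI) (simp add: z)
  then show ?thesis using False by simp
next
  case True
  have inner: "(\<Sum>x<2^d. cnj (KC d m x a) * KC d m x a) = complex_of_real (1 / real d)" if m: "m \<in> {1..<Suc d}" for m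
  proof -
    have m1: "m - 1 < d" using m by auto
    have "(\<Sum>x<2^d. cnj (KC d m x a) * KC d m x a) = cnj (KC d m (2^(d - Suc a)) a) * KC d m (2^(d - Suc a)) a"
      by (rule sum_one[OF pa_less[OF a]]) (simp add: KC_def)
    also have "\<dots> = (cnj (U_D d m $$ (2^(d - Suc a), 2^(d - Suc a))) * U_D d m $$ (2^(d - Suc a), 2^(d - Suc a))) *
         (cnj (fourier d $$ (m - 1, a)) * fourier d $$ (m - 1, a))"
      by (simp add: KC_def mult_ac)
    also have "cnj (U_D d m $$ (2^(d - Suc a), 2^(d - Suc a))) * U_D d m $$ (2^(d - Suc a), 2^(d - Suc a)) = 1"
      using UD_props[of d m] pa_less[OF a] by (simp add: cnj_mult_self)
    also have "cnj (fourier d $$ (m - 1, a)) * fourier d $$ (m - 1, a) = complex_of_real (1 / real d)"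
      by (rule fourier_abs[OF m1 a])
    finally show ?thesis by simp
  qed
  have "(\<Sum>m\<in>{1..<Suc d}. \<Sum>x<2^d. cnj (KC d m x b) * KC d m x a) = (\<Sum>m\<in>{1..<Suc d}. complex_of_real (1 / real d))"
    using True inner by simp
  also have "\<dots> = 1" using a by simp
  finally show ?thesis using True by simp
qed

lemma cptp_rho': "cptp d (d * 2^d) (rho' d)"
proof (rule cptp_cong)
  show "cptp d (d * 2^d) (kraus d (d * 2^d) (KA d) {0})"
    by (rule kraus_cptp[OF _ KA_tp]) auto
qed (rule rho'_kraus)

lemma cptp_Delta_rho': "cptp d (2^d) (\<lambda>X. Delta d (rho' d X))"
proof (rule cptp_cong)
  show "cptp d (2^d) (kraus d (2^d) (KC d) {1..<Suc d})"
    by (rule kraus_cptp[OF _ KC_tp]) auto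
qed (rule Delta_rho'_kraus)


definition kv :: "nat \<Rightarrow> nat \<Rightarrow> (nat \<Rightarrow> nat \<Rightarrow> nat \<Rightarrow> complex) \<Rightarrow> nat \<Rightarrow> complex vec \<Rightarrow> complex vec" where
  "kv n m K l \<psi> = vec m (\<lambda>i. \<Sum>a<n. K l i a * \<psi>$a)"

lemma kraus_single_sum:
  "(\<Sum>a<n. \<Sum>b<n. Ki a * (\<Sum>(p,\<psi>)\<leftarrow>ps. complex_of_real p * \<psi>$a * cnj (\<psi>$b)) * cnj (Kj b)) =
   (\<Sum>(p,\<psi>)\<leftarrow>ps. complex_of_real p * (\<Sum>a<n. Ki a * \<psi>$a) * cnj (\<Sum>b<n. Kj b * \<psi>$b))"
proof (induction ps)
  case Nil then show ?case by simp
next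
  case (Cons x ps)
  obtain p \<psi> where x: "x = (p,\<psi>)" by (cases x)
  have e: "\<And>a b. Ki a * (\<Sum>(p,\<psi>)\<leftarrow>x#ps. complex_of_real p * \<psi>$a * cnj (\<psi>$b)) * cnj (Kj b)
     = Ki a * (complex_of_real p * \<psi>$a * cnj (\<psi>$b)) * cnj (Kj b)
      + Ki a * (\<Sum>(p,\<psi>)\<leftarrow>ps. complex_of_real p * \<psi>$a * cnj (\<psi>$b)) * cnj (Kj b)"
    by (simp add: x ring_distribs)
  have s: "(\<Sum>a<n. \<Sum>b<n. Ki a * (complex_of_real p * \<psi>$a * cnj (\<psi>$b)) * cnj (Kj b))
     = complex_of_real p * (\<Sum>a<n. Ki a * \<psi>$a) * cnj (\<Sum>b<n. Kj b * \<psi>$b)"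
  proof -
    have "(\<Sum>a<n. \<Sum>b<n. Ki a * (complex_of_real p * \<psi>$a * cnj (\<psi>$b)) * cnj (Kj b))
       = complex_of_real p * (\<Sum>a<n. \<Sum>b<n. (Ki a * \<psi>$a) * (cnj (Kj b) * cnj (\<psi>$b)))"
      by (simp add: sum_distrib_left mult_ac)
    also have "(\<Sum>a<n. \<Sum>b<n. (Ki a * \<psi>$a) * (cnj (Kj b) * cnj (\<psi>$b))) = (\<Sum>a<n. Ki a * \<psi>$a) * (\<Sum>b<n. cnj (Kj b) * cnj (\<psi>$b))"
      by (rule sum_product[symmetric])
    finally show ?thesis by (simp add: mult.assoc)
  qed
  have "(\<Sum>a<n. \<Sum>b<n. Ki a * (\<Sum>(p,\<psi>)\<leftarrow>x#ps. complex_of_real p * \<psi>$a * cnj (\<psi>$b)) * cnj (Kj b))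
    = (\<Sum>a<n. \<Sum>b<n. Ki a * (complex_of_real p * \<psi>$a * cnj (\<psi>$b)) * cnj (Kj b))
      + (\<Sum>a<n. \<Sum>b<n. Ki a * (\<Sum>(p,\<psi>)\<leftarrow>ps. complex_of_real p * \<psi>$a * cnj (\<psi>$b)) * cnj (Kj b))"
    by (simp only: e sum.distrib)
  also have "\<dots> = complex_of_real p * (\<Sum>a<n. Ki a * \<psi>$a) * cnj (\<Sum>b<n. Kj b * \<psi>$b)
      + (\<Sum>(p,\<psi>)\<leftarrow>ps. complex_of_real p * (\<Sum>a<n. Ki a * \<psi>$a) * cnj (\<Sum>b<n. Kj b * \<psi>$b))"
    by (simp only: s Cons.IH)
  finally show ?case by (simp add: x)
qed

lemma sum_list_map_concat: "sum_list (map f (concat xss)) = sum_list (map (\<lambda>xs. sum_list (map f xs)) xss)"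
  by (induction xss) auto

lemma kraus_decomp:
  assumes pd: "pure_decomp n \<sigma> ps" and dl: "distinct ls"
    and tp: "\<And>a b. a < n \<Longrightarrow> b < n \<Longrightarrow> (\<Sum>l\<in>set ls. \<Sum>r<m. cnj (K l r b) * K l r a) = (if a = b then 1 else 0)"
    and Q: "\<And>l p \<psi>. l \<in> set ls \<Longrightarrow> (p,\<psi>) \<in> set ps \<Longrightarrow> nsq (kv n m K l \<psi>) > 0 \<Longrightarrow> Q (nrm (kv n m K l \<psi>))"
  shows "\<exists>ps'. pure_decomp m (kraus n m K (set ls) \<sigma>) ps' \<and> (\<forall>(p,\<psi>)\<in>set ps'. Q \<psi>)"
proof -
  define ws where "ws = concat (map (\<lambda>l. map (\<lambda>(p,\<psi>). (p, kv n m K l \<psi>)) ps) ls)"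
  note e = pure_decomp_entries[OF pd]
  have dens: "density m (kraus n m K (set ls) \<sigma>)"
    by (rule kraus_density[OF pure_decomp_density[OF pd] _ tp]) auto
  have ent: "kraus n m K (set ls) \<sigma> $$ (i,j) = (\<Sum>(p,w)\<leftarrow>ws. complex_of_real p * w$i * cnj (w$j))"
    if ij: "i < m" "j < m" for i j
  proof -
    have "kraus n m K (set ls) \<sigma> $$ (i,j) = (\<Sum>l\<in>set ls. \<Sum>a<n. \<Sum>b<n. K l i a * (\<Sum>(p,\<psi>)\<leftarrow>ps. complex_of_real p * \<psi>$a * cnj (\<psi>$b)) * cnj (K l j b))"
      using ij e(2) by (simp add: kraus_index)
    also have "\<dots> = (\<Sum>l\<in>set ls. \<Sum>(p,\<psi>)\<leftarrow>ps. complex_of_real p * (\<Sum>a<n. K l i a * \<psi>$a) * cnj (\<Sum>b<n. K l j b * \<psi>$b))"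
      by (intro sum.cong refl) (rule kraus_single_sum)
    also have "\<dots> = (\<Sum>l\<leftarrow>ls. \<Sum>(p,\<psi>)\<leftarrow>ps. complex_of_real p * (\<Sum>a<n. K l i a * \<psi>$a) * cnj (\<Sum>b<n. K l j b * \<psi>$b))"
      using dl by (simp add: sum_list_distinct_conv_sum_set)
    also have "\<dots> = (\<Sum>(p,w)\<leftarrow>ws. complex_of_real p * w$i * cnj (w$j))"
      unfolding ws_def using ij
      by (simp add: sum_list_map_concat o_def case_prod_unfold kv_def)
    finally show ?thesis .
  qed
  have wsmem: "\<exists>l \<psi>. l \<in> set ls \<and> (p,\<psi>) \<in> set ps \<and> w = kv n m K l \<psi>" if "(p,w) \<in> set ws" for p w
    using that unfolding ws_def by auto
  show ?thesis
  proof (rule mk_decomp[where ws=ws])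
    show "kraus n m K (set ls) \<sigma> \<in> carrier_mat m m" by simp
    show "mtrace (kraus n m K (set ls) \<sigma>) = 1" using dens by (simp add: density_def)
  next
    fix i j assume "i < m" "j < m" then show "kraus n m K (set ls) \<sigma> $$ (i,j) = (\<Sum>(p,w)\<leftarrow>ws. complex_of_real p * w$i * cnj (w$j))"
      by (rule ent)
  next
    fix p w assume "(p,w) \<in> set ws"
    then obtain l \<psi> where l: "l \<in> set ls" "(p,\<psi>) \<in> set ps" "w = kv n m K l \<psi>" using wsmem by blast
    have "p > 0" using pd l(2) by (auto simp: pure_decomp_def)
    then show "p \<ge> 0 \<and> dim_vec w = m" using l by (simp add: kv_def)
  next
    fix p w assume "(p,w) \<in> set ws" "p > 0" "nsq w > 0"
    then obtain l \<psi> where l: "l \<in> set ls" "(p,\<psi>) \<in> set ps" "w = kv n m K l \<psi>" using wsmem by blast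
    then show "Q (nrm w)" using Q \<open>nsq w > 0\<close> by blast
  qed
qed


lemma prod_rep2[simp]: "prod_list (replicate d (2::nat)) = 2^d"
  by (simp add: prod_list_replicate)

lemma digit_rep: "j < d \<Longrightarrow> digit (replicate d 2) x j = (x div 2^(d - Suc j)) mod 2"
  by (simp add: digit_def)

lemma pow_div_mod2:
  assumes "a < d" "j < d"
  shows "((2::nat)^(d - Suc a) div 2^(d - Suc j)) mod 2 = (if j = a then 1 else 0)"
proof -
  define e where "e = d - Suc a"
  define f where "f = d - Suc j"
  show ?thesis
  proof (cases "j = a")
    case True then show ?thesis by simp
  next
    case False
    show ?thesis
    proof (cases "j < a")
      case True
      then have "e < f" using assms by (simp add: e_def f_def)
      then have "(2::nat)^e < 2^f" by (simp add: power_strict_increasing_iff)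
      then show ?thesis using False by (simp add: e_def[symmetric] f_def[symmetric])
    next
      case ja: False
      then have fe: "f < e" using assms False by (simp add: e_def f_def)
      have "(2::nat)^e = 2^f * 2^(e - f)" using fe by (simp add: power_add[symmetric])
      then have "(2::nat)^e div 2^f = 2^(e - f)" by simp
      moreover have "even ((2::nat)^(e - f))" using fe by simp
      ultimately show ?thesis using False by (simp add: e_def[symmetric] f_def[symmetric])
    qed
  qed
qed

lemma digit_rep_pow:
  assumes "a < d" "j < d"
  shows "digit (replicate d 2) (2^(d - Suc a)) j = (if j = a then 1 else 0)"
  using assms by (simp add: digit_rep pow_div_mod2)

lemma sum_nonzero_ex:
  assumes "(\<Sum>a<n. f a) \<noteq> (0::complex)"
  shows "\<exists>a<n. f a \<noteq> 0"
  using assms by (meson lessThan_iff sum.neutral)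

lemma coh_rank_card:
  "dim_vec \<psi> = d \<Longrightarrow> coh_rank \<psi> = card {a. a < d \<and> \<psi>$a \<noteq> 0}"
  by (simp add: coh_rank_def)

lemma Q1:
  assumes k: "2 \<le> k" and dpos: "0 < d"
    and \<psi>: "dim_vec \<psi> = d" "coh_rank \<psi> \<le> k - 1"
    and nz: "nsq (kv d (d * 2^d) (KA d) 0 \<psi>) > 0"
  shows "k_producible_pure (d # replicate d 2) k (nrm (kv d (d * 2^d) (KA d) 0 \<psi>))"
proof -
  define w where "w = kv d (d * 2^d) (KA d) 0 \<psi>"
  define S where "S = {a. a < d \<and> \<psi>$a \<noteq> 0}"
  define B where "B = insert 0 (Suc ` S)"
  have dims: "prod_list (d # replicate d 2) = d * 2^d" by simp
  have wd: "dim_vec w = d * 2^d" by (simp add: w_def kv_def)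
  show ?thesis unfolding w_def[symmetric]
  proof (rule producible_of_support[where B=B])
    show "unit_vec_c (prod_list (d # replicate d 2)) (nrm w)"
      using nrm_unit[of w] nz wd by (simp add: w_def)
    show "B \<subseteq> {..<length (d # replicate d 2)}" by (auto simp: B_def S_def)
    show "B \<noteq> {}" by (simp add: B_def)
    have fS: "finite S" by (simp add: S_def)
    have "card B \<le> Suc (card (Suc ` S))" unfolding B_def by (rule card_insert_le_m1) (use fS in auto)
    also have "card (Suc ` S) = card S" by (simp add: card_image)
    also have "card S = coh_rank \<psi>" using coh_rank_card[OF \<psi>(1)] by (simp add: S_def)
    finally show "card B \<le> k" using \<psi>(2) k by simp
    show "1 \<le> k" using k by simp
  next
    fix r j assume r: "r < prod_list (d # replicate d 2)" and wr: "nrm w $ r \<noteq> 0"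
      and j: "j < length (d # replicate d 2)" and jB: "j \<notin> B"
    have r': "r < d * 2^d" using r by simp
    have "w $ r \<noteq> 0" using wr r' wd nz by (simp add: nrm_def w_def)
    then have "(\<Sum>a<d. KA d 0 r a * \<psi>$a) \<noteq> 0" using r' by (simp add: w_def kv_def)
    then obtain a where a: "a < d" "KA d 0 r a * \<psi>$a \<noteq> 0" using sum_nonzero_ex by blast
    then have ra: "r = a * 2^d + 2^(d - Suc a)" and \<psi>a: "\<psi>$a \<noteq> 0" by (auto simp: KA_def split: if_splits)
    obtain j' where j': "j = Suc j'" "j' < d" using j jB by (cases j) (auto simp: B_def)
    have "j' \<notin> S" using jB j' by (auto simp: B_def)
    then have ja: "j' \<noteq> a" using a \<psi>a by (auto simp: S_def)
    have rm: "r mod 2^d = 2^(d - Suc a)" using ra pa_less[OF a(1)] by simp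
    have "digit (d # replicate d 2) r j = digit (replicate d 2) r j'" by (simp add: j' digit_Cons_Suc)
    also have "\<dots> = digit (replicate d 2) (r mod prod_list (replicate d 2)) j'"
      using j' digit_mod[of j' "replicate d 2" r] by simp
    also have "\<dots> = digit (replicate d 2) (2^(d - Suc a)) j'" by (simp add: rm)
    also have "\<dots> = 0" using digit_rep_pow[OF a(1) j'(2)] ja by simp
    finally show "digit (d # replicate d 2) r j = 0" .
  qed
qed

lemma Q2:
  assumes k: "2 \<le> k"
    and \<psi>: "dim_vec \<psi> = d" "coh_rank \<psi> \<le> k - 1"
    and nz: "nsq (kv d (2^d) (KC d) m \<psi>) > 0"
  shows "k_producible_pure (replicate d 2) (k - 1) (nrm (kv d (2^d) (KC d) m \<psi>))"
proof -
  define w where "w = kv d (2^d) (KC d) m \<psi>"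
  define S where "S = {a. a < d \<and> \<psi>$a \<noteq> 0}"
  have wd: "dim_vec w = 2^d" by (simp add: w_def kv_def)
  have supp: "\<exists>a<d. x = 2^(d - Suc a) \<and> \<psi>$a \<noteq> 0" if x: "x < 2^d" "w$x \<noteq> 0" for x
  proof -
    have "(\<Sum>a<d. KC d m x a * \<psi>$a) \<noteq> 0" using x by (simp add: w_def kv_def)
    then obtain a where a: "a < d" "KC d m x a * \<psi>$a \<noteq> 0" using sum_nonzero_ex by blast
    then show ?thesis by (auto simp: KC_def split: if_splits)
  qed
  have "S \<noteq> {}"
  proof
    assume "S = {}"
    then have "w$x = 0" if "x < 2^d" for x using supp[OF that] by (auto simp: S_def)
    then have "nsq w = 0" by (simp add: nsq_def wd)
    then show False using nz by (simp add: w_def)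
  qed
  show ?thesis unfolding w_def[symmetric]
  proof (rule producible_of_support[where B=S])
    show "unit_vec_c (prod_list (replicate d 2)) (nrm w)"
      using nrm_unit[of w] nz wd by (simp add: w_def)
    show "S \<subseteq> {..<length (replicate d 2)}" by (auto simp: S_def)
    show "S \<noteq> {}" by fact
    have "card S = coh_rank \<psi>" using coh_rank_card[OF \<psi>(1)] by (simp add: S_def)
    then show "card S \<le> k - 1" using \<psi>(2) by simp
    show "1 \<le> k - 1" using k by simp
  next
    fix x j assume x: "x < prod_list (replicate d 2)" and wx: "nrm w $ x \<noteq> 0"
      and j: "j < length (replicate d 2)" and jS: "j \<notin> S"
    have x': "x < 2^d" using x by simp
    have "w $ x \<noteq> 0" using wx x' wd nz by (simp add: nrm_def w_def)
    then obtain a where a: "a < d" "x = 2^(d - Suc a)" "\<psi>$a \<noteq> 0" using supp[OF x'] by blast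
    have "j \<noteq> a" using jS a by (auto simp: S_def)
    then show "digit (replicate d 2) x j = 0" using digit_rep_pow[OF a(1)] j a(2) by simp
  qed
qed


lemma coh_rank_le: "coh_rank \<psi> \<le> dim_vec \<psi>"
proof -
  have "{i. i < dim_vec \<psi> \<and> \<psi> $ i \<noteq> 0} \<subseteq> {..<dim_vec \<psi>}" by auto
  then show ?thesis unfolding coh_rank_def by (metis card_lessThan card_mono finite_lessThan)
qed

lemma incoh_decomp:
  assumes "\<sigma> \<in> incoh_set d r"
  shows "\<exists>ps. pure_decomp d \<sigma> ps \<and> (\<forall>(p,\<psi>)\<in>set ps. coh_rank \<psi> \<le> r)"
proof -
  have dens: "density d \<sigma>" and cn: "coh_number d \<sigma> \<le> r" using assms by (auto simp: incoh_set_def)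
  obtain ps0 where ps0: "pure_decomp d \<sigma> ps0" using density_decomp[OF dens] by blast
  have "\<forall>(p,\<psi>)\<in>set ps0. coh_rank \<psi> \<le> d"
    using ps0 coh_rank_le unfolding pure_decomp_def unit_vec_c_def by fastforce
  then have ex: "\<exists>ps. pure_decomp d \<sigma> ps \<and> (\<forall>(p,\<psi>)\<in>set ps. coh_rank \<psi> \<le> d)" using ps0 by blast
  have "\<exists>ps. pure_decomp d \<sigma> ps \<and> (\<forall>(p,\<psi>)\<in>set ps. coh_rank \<psi> \<le> coh_number d \<sigma>)"
    unfolding coh_number_def by (rule LeastI_ex) (use ex in blast)
  then show ?thesis using cn by fastforce
qed

lemma incoh_nonempty:
  assumes "0 < d" "1 \<le> r"
  shows "ketbra d 0 0 \<in> incoh_set d r"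
proof -
  define e where "e = vec d (\<lambda>i. if i = 0 then (1::complex) else 0)"
  have u: "unit_vec_c d e"
  proof -
    have "(\<Sum>i<d. (cmod (e$i))^2) = (cmod (e$0))^2"
      by (rule sum_one[OF assms(1)]) (simp add: e_def)
    then show ?thesis using assms by (simp add: unit_vec_c_def e_def)
  qed
  have eq: "ketbra d 0 0 = msum d (\<lambda>(p,\<psi>). complex_of_real p \<cdot>\<^sub>m proj \<psi>) [(1, e)]"
    by (rule eq_matI) (auto simp: msum_def ketbra_def e_def)
  have pd: "pure_decomp d (ketbra d 0 0) [(1, e)]"
    using u eq by (simp add: pure_decomp_def)
  have cr: "coh_rank e = 1"
  proof -
    have "{i. i < dim_vec e \<and> e $ i \<noteq> 0} = {0}" using assms by (auto simp: e_def split: if_splits)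
    then show ?thesis by (simp add: coh_rank_def)
  qed
  have "coh_number d (ketbra d 0 0) \<le> 1"
    unfolding coh_number_def by (rule Least_le) (use pd cr in auto)
  then show ?thesis using pure_decomp_density[OF pd] assms by (simp add: incoh_set_def)
qed

theorem theorem3:
  fixes D :: "complex mat \<Rightarrow> complex mat \<Rightarrow> real"
    and d k :: nat and \<rho> :: "complex mat"
  assumes "contractive_distance D"
    and "density d \<rho>"
    and "2 \<le> k" and "k \<le> d"
  shows "C_D D d k \<rho> \<ge> E_D D (d # replicate d 2) (k + 1) (rho' d \<rho>)
       \<and> C_D D d k \<rho> \<ge> E_D D (replicate d 2) k (Delta d (rho' d \<rho>))"
proof -
  have nonneg: "\<And>n a b. density n a \<Longrightarrow> density n b \<Longrightarrow> 0 \<le> D a b"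
    and contr: "\<And>n m \<Phi> a b. cptp n m \<Phi> \<Longrightarrow> density n a \<Longrightarrow> density n b \<Longrightarrow> D (\<Phi> a) (\<Phi> b) \<le> D a b"
    using assms(1) unfolding contractive_distance_def by blast+
  have dpos: "0 < d" using assms(3,4) by simp
  have \<rho>c: "\<rho> \<in> carrier_mat d d" using assms(2) by (simp add: density_def psd_iff)
  have dens1: "density (d * 2^d) (rho' d \<sigma>)" if "density d \<sigma>" for \<sigma>
  proof -
    have "\<sigma> \<in> carrier_mat d d" using that by (simp add: density_def psd_iff)
    then show ?thesis using rho'_kraus kraus_density[OF that _ KA_tp] by simp
  qed
  have dens2: "density (2^d) (Delta d (rho' d \<sigma>))" if "density d \<sigma>" for \<sigma>
  proof -
    have "\<sigma> \<in> carrier_mat d d" using that by (simp add: density_def psd_iff)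
    then show ?thesis using Delta_rho'_kraus kraus_density[OF that _ KC_tp] by simp
  qed
  define I where "I = incoh_set d (k - 1)"
  have k1: "1 \<le> k - 1" using assms(3) by simp
  have Ine: "I \<noteq> {}" using incoh_nonempty[OF dpos k1] unfolding I_def by blast
  define E1 where "E1 = E_D D (d # replicate d 2) (k + 1) (rho' d \<rho>)"
  define E2 where "E2 = E_D D (replicate d 2) k (Delta d (rho' d \<rho>))"
  have key: "E1 \<le> D \<rho> \<sigma> \<and> E2 \<le> D \<rho> \<sigma>" if \<sigma>I: "\<sigma> \<in> I" for \<sigma>
  proof -
    obtain ps where ps: "pure_decomp d \<sigma> ps" "\<forall>(p,\<psi>)\<in>set ps. coh_rank \<psi> \<le> k - 1"
      using incoh_decomp[OF \<sigma>I[unfolded I_def]] by blast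
    have \<sigma>d: "density d \<sigma>" using pure_decomp_density[OF ps(1)] .
    have \<sigma>c: "\<sigma> \<in> carrier_mat d d" using \<sigma>d by (simp add: density_def psd_iff)
    have psmem: "dim_vec \<psi> = d \<and> coh_rank \<psi> \<le> k - 1" if "(p,\<psi>) \<in> set ps" for p \<psi>
      using ps that unfolding pure_decomp_def unit_vec_c_def by auto
    have "\<exists>ps'. pure_decomp (d * 2^d) (kraus d (d * 2^d) (KA d) (set [0]) \<sigma>) ps' \<and>
        (\<forall>(p,\<psi>)\<in>set ps'. k_producible_pure (d # replicate d 2) k \<psi>)"
    proof (rule kraus_decomp[OF ps(1)])
      show "distinct [0::nat]" by simp
      fix a b assume "a < d" "b < d"
      then show "(\<Sum>l\<in>set [0]. \<Sum>r<d * 2^d. cnj (KA d l r b) * KA d l r a) = (if a = b then 1 else 0)"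
        using KA_tp by simp
    next
      fix l p \<psi> assume "l \<in> set [0::nat]" "(p,\<psi>) \<in> set ps" "nsq (kv d (d * 2^d) (KA d) l \<psi>) > 0"
      then show "k_producible_pure (d # replicate d 2) k (nrm (kv d (d * 2^d) (KA d) l \<psi>))"
        using Q1[OF assms(3) dpos] psmem by auto
    qed
    then have s1: "rho' d \<sigma> \<in> producible_set (d # replicate d 2) (k + 1 - 1)"
      using rho'_kraus[OF \<sigma>c] by (simp add: producible_set_def)
    have bdd1: "bdd_below ((\<lambda>s. D (rho' d \<rho>) s) ` producible_set (d # replicate d 2) (k + 1 - 1))"
    proof (rule bdd_belowI[of _ 0])
      fix x assume "x \<in> (\<lambda>s. D (rho' d \<rho>) s) ` producible_set (d # replicate d 2) (k + 1 - 1)"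
      then obtain s ps' where "x = D (rho' d \<rho>) s" "pure_decomp (prod_list (d # replicate d 2)) s ps'"
        by (auto simp: producible_set_def)
      then show "0 \<le> x" using nonneg[OF dens1[OF assms(2)]] pure_decomp_density by simp
    qed
    have "E1 \<le> D (rho' d \<rho>) (rho' d \<sigma>)"
      unfolding E1_def E_D_def by (rule cInf_lower[OF imageI[OF s1] bdd1])
    also have "\<dots> \<le> D \<rho> \<sigma>" by (rule contr[OF cptp_rho' assms(2) \<sigma>d])
    finally have e1: "E1 \<le> D \<rho> \<sigma>" .
    have "\<exists>ps'. pure_decomp (2^d) (kraus d (2^d) (KC d) (set [1..<Suc d]) \<sigma>) ps' \<and>
        (\<forall>(p,\<psi>)\<in>set ps'. k_producible_pure (replicate d 2) (k - 1) \<psi>)"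
    proof (rule kraus_decomp[OF ps(1)])
      show "distinct [1..<Suc d]" by simp
      fix a b assume "a < d" "b < d"
      then show "(\<Sum>l\<in>set [1..<Suc d]. \<Sum>r<2^d. cnj (KC d l r b) * KC d l r a) = (if a = b then 1 else 0)"
        unfolding set_upt by (rule KC_tp)
    next
      fix l p \<psi> assume "l \<in> set [1..<Suc d]" "(p,\<psi>) \<in> set ps" "nsq (kv d (2^d) (KC d) l \<psi>) > 0"
      then show "k_producible_pure (replicate d 2) (k - 1) (nrm (kv d (2^d) (KC d) l \<psi>))"
        using Q2[OF assms(3)] psmem by auto
    qed
    then have "\<exists>ps'. pure_decomp (2^d) (Delta d (rho' d \<sigma>)) ps' \<and>
        (\<forall>(p,\<psi>)\<in>set ps'. k_producible_pure (replicate d 2) (k - 1) \<psi>)"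
      unfolding set_upt Delta_rho'_kraus[OF \<sigma>c] .
    then have s2: "Delta d (rho' d \<sigma>) \<in> producible_set (replicate d 2) (k - 1)"
      by (simp add: producible_set_def)
    have bdd2: "bdd_below ((\<lambda>s. D (Delta d (rho' d \<rho>)) s) ` producible_set (replicate d 2) (k - 1))"
    proof (rule bdd_belowI[of _ 0])
      fix x assume "x \<in> (\<lambda>s. D (Delta d (rho' d \<rho>)) s) ` producible_set (replicate d 2) (k - 1)"
      then obtain s ps' where "x = D (Delta d (rho' d \<rho>)) s" "pure_decomp (prod_list (replicate d 2)) s ps'"
        by (auto simp: producible_set_def)
      then show "0 \<le> x" using nonneg[OF dens2[OF assms(2)]] pure_decomp_density by simp
    qed
    have "E2 \<le> D (Delta d (rho' d \<rho>)) (Delta d (rho' d \<sigma>))"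
      unfolding E2_def E_D_def by (rule cInf_lower[OF imageI[OF s2] bdd2])
    also have "\<dots> \<le> D \<rho> \<sigma>"
      using contr[OF cptp_Delta_rho' assms(2) \<sigma>d] by simp
    finally have e2: "E2 \<le> D \<rho> \<sigma>" .
    show ?thesis using e1 e2 by simp
  qed
  have "E1 \<le> C_D D d k \<rho>"
    unfolding C_D_def I_def[symmetric] by (rule cInf_greatest) (use Ine key in auto)
  moreover have "E2 \<le> C_D D d k \<rho>"
    unfolding C_D_def I_def[symmetric] by (rule cInf_greatest) (use Ine key in auto)
  ultimately show ?thesis by (simp add: E1_def E2_def)
qed

end
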